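(* In the symmetric Tardos scheme, the arcsine distribution is asymptotically optimal: for each integer $c \ge 1$ let $F_{2c}$ be the optimal (Gauss–Legendre) bias distribution function against $2c$ colluders, namely $F_{2c}(p) = \frac{1}{N_c}\sum_{k=1}^c w_{k,c} H(p - p_{k,c})$ for $0 \le p \le 1$; then for every $p \in (0,1)$, $F_{2c}(p) \to F_\infty(p) = \frac{2}{\pi}\arcsin\sqrt{p}$ as $c \to \infty$.
   Context: Symmetric Tardos scheme: for $n$ users and $\ell$ segments, biases $p_i \sim F$ are drawn independently for each segment $i$, code entries $X_{j,i} \sim \mathrm{Bernoulli}(p_i)$; given a pirate output $y \in \{0,1\}^\ell$, user $j$ gets score $\sum_i g(X_{j,i},y_i,p_i)$ with $g = +\sqrt{(1-p)/p}$ if $X=1,y=1$; $-\sqrt{(1-p)/p}$ if $X=1,y=0$; $-\sqrt{p/(1-p)}$ if $X=0,y=1$; $+\sqrt{p/(1-p)}$ if $X=0,y=0$; and is accused if the score exceeds a threshold. Here $P_c(x)=\frac{1}{2^c c!}\left(\frac{d}{dx}\right)^c(x^2-1)^c$ is the $c$th Legendre polynomial with roots $x_{1,c}<\cdots<x_{c,c}$ in $(-1,1)$, $p_{k,c}=(x_{k,c}+1)/2$, $w_{k,c}=2/\big((1-x_{k,c}^2)^{3/2}P_c'(x_{k,c})^2\big)$, $N_c=\sum_{k=1}^c w_{k,c}$, and $H$ is the Heaviside step function. The distributions $F_{2c}$ (equal to $F_{2c-1}$) are, by a result of Nuida et al., the bias distributions maximizing the expected coalition score against $2c-1$ or $2c$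 colluders; "asymptotically optimal" means that these optimal distributions converge to the arcsine distribution $F_\infty$. *)

theory Defs
  imports "HOL-Analysis.Analysis" "HOL-Computational_Algebra.Polynomial"
begin

definition legendre :: "nat \<Rightarrow> real poly" where
  "legendre c = smult (1 / (2 ^ c * fact c)) ((pderiv ^^ c) ([:-1, 0, 1:] ^ c))"

text \<open>Roots x_{1,c} < ... < x_{c,c} of P_c in (-1,1), indexed from 1.\<close>
definition legendre_root :: "nat \<Rightarrow> nat \<Rightarrow> real" where
  "legendre_root k c =
     sorted_list_of_set {x. -1 < x \<and> x < 1 \<and> poly (legendre c) x = 0} ! (k - 1)"

definition tardos_p :: "nat \<Rightarrow> nat \<Rightarrow> real" where
  "tardos_p k c = (legendre_root k c + 1) / 2"

definition tardos_w :: "nat \<Rightarrow> nat \<Rightarrow> real" where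
  "tardos_w k c = 2 / ((1 - (legendre_root k c)\<^sup>2) powr (3/2)
                        * (poly (pderiv (legendre c)) (legendre_root k c))\<^sup>2)"

definition tardos_N :: "nat \<Rightarrow> real" where
  "tardos_N c = (\<Sum>k=1..c. tardos_w k c)"

definition heaviside :: "real \<Rightarrow> real" where
  "heaviside x = (if x \<ge> 0 then 1 else 0)"

definition F_opt :: "nat \<Rightarrow> real \<Rightarrow> real" where
  "F_opt c p = (1 / tardos_N c) * (\<Sum>k=1..c. tardos_w k c * heaviside (p - tardos_p k c))"

definition F_arcsine :: "real \<Rightarrow> real" where
  "F_arcsine p = 2 / pi * arcsin (sqrt p)"

end

theory Submission
  imports Defs
begin
definition Ipol :: "real poly \<Rightarrow> real" where
  "Ipol p = integral {-1..1} (\<lambda>x. poly p x)"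

lemma poly_integrable[simp]: "(\<lambda>x. poly p x) integrable_on {a..b}"
  for p :: "real poly"
  by (intro integrable_continuous_real continuous_on_poly continuous_on_id)

lemma Ipol_add[simp]: "Ipol (p + q) = Ipol p + Ipol q"
proof -
  have e: "(\<lambda>x. poly (p+q) x) = (\<lambda>x. poly p x + poly q x)" by auto
  show ?thesis unfolding Ipol_def e by (simp add: integral_add)
qed

lemma Ipol_diff[simp]: "Ipol (p - q) = Ipol p - Ipol q"
proof -
  have e: "(\<lambda>x. poly (p-q) x) = (\<lambda>x. poly p x - poly q x)" by auto
  show ?thesis unfolding Ipol_def e by (simp add: integral_diff)
qed

lemma Ipol_minus[simp]: "Ipol (- p) = - Ipol p"
proof -
  have e: "(\<lambda>x. poly (-p) x) = (\<lambda>x. - poly p x)" by auto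
  show ?thesis unfolding Ipol_def e by simp
qed

lemma Ipol_smult[simp]: "Ipol (smult a p) = a * Ipol p"
proof -
  have e: "(\<lambda>x. poly (smult a p) x) = (\<lambda>x. a * poly p x)" by auto
  show ?thesis unfolding Ipol_def e by simp
qed

lemma Ipol_0[simp]: "Ipol 0 = 0"
proof -
  have e: "(\<lambda>x. poly 0 x) = (\<lambda>x::real. 0)" by auto
  show ?thesis unfolding Ipol_def e by simp
qed

lemma Ipol_pderiv: "Ipol (pderiv p) = poly p 1 - poly p (-1)"
proof -
  have "((\<lambda>x. poly (pderiv p) x) has_integral (poly p 1 - poly p (-1))) {-1..1}"
    by (intro fundamental_theorem_of_calculus)
       (auto simp: has_real_derivative_iff_has_vector_derivative[symmetric] intro!: DERIV_subset[OF poly_DERIV])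
  then show ?thesis unfolding Ipol_def by (rule integral_unique)
qed

lemma Ipol_pos:
  assumes "p \<noteq> 0" "\<And>x. x \<in> {-1..1} \<Longrightarrow> poly p x \<ge> 0"
  shows "Ipol p > 0"
proof -
  have ge: "Ipol p \<ge> 0" unfolding Ipol_def using assms(2) by (intro integral_nonneg) auto
  have "Ipol p \<noteq> 0"
  proof
    assume "Ipol p = 0"
    then have "\<forall>x\<in>{-1..1}. poly p x = 0"
      using integral_eq_0_iff[of "-1" 1 "\<lambda>x. poly p x"] assms(2)
        continuous_on_poly[OF continuous_on_id, of "{-1..1}" p]
      unfolding Ipol_def by auto
    then have "{-1..1::real} \<subseteq> {x. poly p x = 0}" by auto
    moreover have "infinite {-1..1::real}" by simp
    ultimately show False using poly_roots_finite[OF assms(1)] finite_subset by blast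
  qed
  with ge show ?thesis by simp
qed

lemma Ipol_mono:
  assumes "\<And>x. x \<in> {-1..1} \<Longrightarrow> poly p x \<le> poly q x"
  shows "Ipol p \<le> Ipol q"
  unfolding Ipol_def using assms by (intro integral_le) auto

lemma Ipol_sum: "Ipol (\<Sum>i\<in>A. f i) = (\<Sum>i\<in>A. Ipol (f i))"
  by (induction A rule: infinite_finite_induct) auto

lemma poly_rolle:
  fixes f :: "real poly"
  assumes "a < b" "poly f a = 0" "poly f b = 0"
  shows "\<exists>z. a < z \<and> z < b \<and> poly (pderiv f) z = 0"
proof -
  have d: "((\<lambda>x. poly f x) has_derivative (\<lambda>v. v * poly (pderiv f) x)) (at x)" for x
  proof -
    have "(\<lambda>v. v * poly (pderiv f) x) = (*) (poly (pderiv f) x)" by (auto simp: fun_eq_iff)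
    then show ?thesis using poly_DERIV[of f x] unfolding has_field_derivative_def by simp
  qed
  have "\<exists>z. a < z \<and> z < b \<and> (\<lambda>v. v * poly (pderiv f) z) = (\<lambda>v. 0)"
    by (rule Rolle_deriv[OF assms(1), of "\<lambda>x. poly f x"])
       (use assms d in \<open>auto intro!: continuous_on_poly continuous_on_id\<close>)
  then obtain z where "a < z" "z < b" "(\<lambda>v. v * poly (pderiv f) z) = (\<lambda>v. 0)" by blast
  then show ?thesis by (metis mult_1)
qed

lemma rolle_many:
  fixes f :: "real poly"
  assumes "finite Z" "\<forall>z\<in>Z. poly f z = 0" "card Z = Suc n"
  shows "\<exists>Z'. finite Z' \<and> card Z' = n \<and> (\<forall>z\<in>Z'. poly (pderiv f) z = 0)
           \<and> (\<forall>z\<in>Z'. Min Z < z \<and> z < Max Z)"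
  using assms
proof (induction n arbitrary: Z)
  case 0
  then show ?case by (intro exI[of _ "{}"]) auto
next
  case (Suc n)
  define m where "m = Min Z"
  define Z1 where "Z1 = Z - {m}"
  have ne: "Z \<noteq> {}" using Suc.prems by auto
  have mZ: "m \<in> Z" unfolding m_def using Suc.prems ne by auto
  have cZ1: "card Z1 = Suc n" unfolding Z1_def using Suc.prems mZ by auto
  have fZ1: "finite Z1" unfolding Z1_def using Suc.prems by auto
  have ne1: "Z1 \<noteq> {}" using cZ1 by auto
  obtain Z' where Z': "finite Z'" "card Z' = n" "\<forall>z\<in>Z'. poly (pderiv f) z = 0"
     "\<forall>z\<in>Z'. Min Z1 < z \<and> z < Max Z1"
    using Suc.IH[OF fZ1 _ cZ1] Suc.prems unfolding Z1_def by auto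
  have m1: "Min Z1 \<in> Z1" using fZ1 ne1 by auto
  have "m \<le> Min Z1" unfolding m_def using Suc.prems m1 unfolding Z1_def by auto
  moreover have "m \<noteq> Min Z1" using m1 unfolding Z1_def by auto
  ultimately have mlt: "m < Min Z1" by simp
  obtain z0 where z0: "m < z0" "z0 < Min Z1" "poly (pderiv f) z0 = 0"
    using poly_rolle[OF mlt] Suc.prems mZ m1 unfolding Z1_def by auto
  have MaxZ: "Max Z1 \<le> Max Z" unfolding Z1_def using Suc.prems ne1 Z1_def
    by (intro Max_mono) auto
  have "z0 \<notin> Z'" using Z'(4) z0(2) by auto
  moreover have "Min Z1 \<le> Max Z1" using fZ1 ne1 by simp
  ultimately show ?case using Z' z0 MaxZ
    by (intro exI[of _ "insert z0 Z'"]) (auto simp: m_def)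
qed

definition U :: "nat \<Rightarrow> real poly" where "U c = [:-1,0,1:]^c"

lemma U_factor: "U c = [:-1,1:]^c * [:-(-1),1:]^c"
proof -
  have e: "[:-1,0,1::real:] = [:-1,1:] * [:-(-1),1:]" by simp
  show ?thesis unfolding U_def e power_mult_distrib ..
qed

lemma dvd_pderiv_iter:
  fixes p :: "real poly"
  assumes "[:-a,1:]^(n+j) dvd p"
  shows "[:-a,1:]^n dvd (pderiv^^j) p"
  using assms
proof (induction j arbitrary: p)
  case 0 then show ?case by simp
next
  case (Suc j)
  from Suc.prems obtain q where q: "p = [:-a,1:]^(Suc (n+j)) * q" by (auto elim: dvdE)
  have "pderiv p = [:-a,1:]^(Suc (n+j)) * pderiv q + smult (of_nat (Suc (n+j))) (q * [:-a,1:]^(n+j))"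
    unfolding q by (rule lemma_order_pderiv1)
  also have "\<dots> = [:-a,1:]^(n+j) * ([:-a,1:] * pderiv q + smult (of_nat (Suc (n+j))) q)"
    by (simp add: algebra_simps)
  finally have "[:-a,1:]^(n+j) dvd pderiv p" by simp
  then have "[:-a,1:]^n dvd (pderiv^^j) (pderiv p)" by (rule Suc.IH)
  then show ?case by (simp add: funpow_Suc_right del: funpow.simps)
qed

lemma DU_vanish:
  assumes "j < c" "a = 1 \<or> a = -1"
  shows "poly ((pderiv^^j) (U c)) a = 0"
proof -
  have cj: "c - j + j = c" using assms(1) by simp
  have "[:-a,1:]^((c-j)+j) dvd U c" using assms(2) unfolding U_factor cj by auto
  then have "[:-a,1:]^(c-j) dvd (pderiv^^j) (U c)" by (rule dvd_pderiv_iter)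
  moreover have "[:-a,1:] dvd [:-a,1:]^(c-j)" using assms(1)
    by (metis dvd_power less_numeral_extra(3) zero_less_diff)
  ultimately have "[:-a,1:] dvd (pderiv^^j) (U c)" using dvd_trans by blast
  then show ?thesis by (simp add: poly_eq_0_iff_dvd)
qed

lemma DU_roots:
  assumes "j \<le> c"
  shows "\<exists>Z. finite Z \<and> card Z = j \<and> Z \<subseteq> {-1<..<1} \<and> (\<forall>z\<in>Z. poly ((pderiv^^j) (U c)) z = 0)"
  using assms
proof (induction j)
  case 0 then show ?case by (intro exI[of _ "{}"]) auto
next
  case (Suc j)
  then obtain Z where Z: "finite Z" "card Z = j" "Z \<subseteq> {-1<..<1}"
      "\<forall>z\<in>Z. poly ((pderiv^^j) (U c)) z = 0" by auto
  define W where "W = insert (-1) (insert 1 Z)"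
  have fW: "finite W" unfolding W_def using Z by auto
  have "-1 \<notin> Z" "1 \<notin> Z" using Z(3) by auto
  then have cW: "card W = Suc (Suc j)" unfolding W_def using Z by auto
  have zW: "\<forall>z\<in>W. poly ((pderiv^^j) (U c)) z = 0" unfolding W_def
    using Z(4) DU_vanish[of j c] Suc.prems by auto
  have minW: "Min W = -1" unfolding W_def using Z
    by (intro Min_eqI) (auto simp: fW[unfolded W_def])
  have maxW: "Max W = 1" unfolding W_def using Z
    by (intro Max_eqI) (auto simp: fW[unfolded W_def])
  obtain Z' where "finite Z'" "card Z' = Suc j" "\<forall>z\<in>Z'. poly (pderiv ((pderiv^^j) (U c))) z = 0"
     "\<forall>z\<in>Z'. Min W < z \<and> z < Max W"
    using rolle_many[OF fW zW cW] by blast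
  then show ?case using minW maxW by (intro exI[of _ Z']) auto
qed

lemma degree_DU: "degree ((pderiv^^j) (U c)) = 2*c - j"
proof (induction j)
  case 0
  have "degree (U c) = 2*c" unfolding U_def
    by (subst degree_power_eq) auto
  then show ?case by simp
next
  case (Suc j) then show ?case by (simp add: degree_pderiv)
qed

lemma legendre_eq: "legendre c = smult (1 / (2 ^ c * fact c)) ((pderiv ^^ c) (U c))"
  unfolding legendre_def U_def by simp

lemma degree_legendre: "degree (legendre c) = c"
  unfolding legendre_eq by (simp add: degree_DU)

lemma legendre_nz: "c \<ge> 1 \<Longrightarrow> legendre c \<noteq> 0"
  using degree_legendre[of c] by auto

lemma DU_orth:
  assumes "j \<le> c" "degree q < j"
  shows "Ipol ((pderiv^^j) (U c) * q) = 0"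
  using assms
proof (induction j arbitrary: q)
  case 0 then show ?case by simp
next
  case (Suc j)
  define v where "v = (pderiv^^j) (U c)"
  have v1: "poly v 1 = 0" "poly v (-1) = 0" unfolding v_def using DU_vanish[of j c] Suc.prems by auto
  have "Ipol (pderiv (v * q)) = 0" using v1 by (simp add: Ipol_pderiv)
  then have eq: "Ipol (q * pderiv v) = - Ipol (v * pderiv q)" by (simp add: pderiv_mult)
  have "Ipol (v * pderiv q) = 0"
  proof (cases "degree q = 0")
    case True then show ?thesis by (simp add: pderiv_eq_0_iff[THEN iffD2])
  next
    case False
    then have "degree (pderiv q) < j" using Suc.prems by (simp add: degree_pderiv)
    then show ?thesis unfolding v_def using Suc.IH Suc.prems by simp
  qed
  then show ?case using eq unfolding v_def by (simp add: mult.commute)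
qed

lemma legendre_orth:
  assumes "degree q < c"
  shows "Ipol (legendre c * q) = 0"
  using DU_orth[of c c q] assms unfolding legendre_eq by (simp add: mult_smult_left)

definition Rset :: "nat \<Rightarrow> real set" where
  "Rset c = {x. -1 < x \<and> x < 1 \<and> poly (legendre c) x = 0}"

lemma Rset_props:
  assumes "c \<ge> 1"
  shows "finite (Rset c)" "card (Rset c) = c" "{x. poly (legendre c) x = 0} = Rset c"
proof -
  have nz: "legendre c \<noteq> 0" using legendre_nz assms by auto
  have fin: "finite {x. poly (legendre c) x = 0}" using poly_roots_finite[OF nz] .
  have cb: "card {x. poly (legendre c) x = 0} \<le> c"
    using card_poly_roots_bound[OF nz] degree_legendre by simp
  obtain Z where Z: "finite Z" "card Z = c" "Z \<subseteq> {-1<..<1}" "\<forall>z\<in>Z. poly ((pderiv^^c) (U c)) z = 0"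
    using DU_roots[of c c] by auto
  have "Z \<subseteq> Rset c" using Z unfolding Rset_def legendre_eq by auto
  moreover have sub: "Rset c \<subseteq> {x. poly (legendre c) x = 0}" unfolding Rset_def by auto
  moreover have "finite (Rset c)" using fin sub finite_subset by blast
  ultimately have "c \<le> card (Rset c)" using Z card_mono by metis
  moreover have "card (Rset c) \<le> c" using card_mono[OF fin sub] cb by simp
  ultimately show "card (Rset c) = c" by simp
  show "finite (Rset c)" using fin sub finite_subset by blast
  show "{x. poly (legendre c) x = 0} = Rset c"
    using card_subset_eq[OF fin sub] \<open>card (Rset c) = c\<close> cb card_mono[OF fin sub] by simp
qed

lemma coeff_quad_mult: "coeff ([:1,0,-1:] * X) (Suc (Suc n)) = coeff X (Suc (Suc n)) - coeff (X::real poly) n"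
  by (simp add: mult_pCons_left coeff_pCons)

lemma degree_lt_if_coeff0:
  fixes p :: "real poly"
  assumes "degree p \<le> n" "coeff p n = 0" "n \<ge> 1"
  shows "degree p < n"
proof (rule ccontr)
  assume "\<not> degree p < n"
  then have "degree p = n" using assms by simp
  then have "p = 0" using assms(2) by (metis leading_coeff_0_iff)
  then show False using \<open>degree p = n\<close> assms(3) by simp
qed

lemma sum_single: "finite A \<Longrightarrow> b \<in> A \<Longrightarrow> (\<And>a. a \<in> A \<Longrightarrow> a \<noteq> b \<Longrightarrow> f a = 0) \<Longrightarrow> sum f A = f b"
  by (subst sum.remove[of A b]) (auto intro!: sum.neutral)

context
  fixes c :: nat
  assumes c1: "c \<ge> 1"
begin

abbreviation "PP \<equiv> legendre c"
abbreviation "RR \<equiv> Rset c"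
abbreviation "LL \<equiv> lead_coeff (legendre c)"

definition ell :: "real \<Rightarrow> real poly" where
  "ell a = smult LL (\<Prod>s\<in>RR - {a}. [:-s,1:])"

lemma LL_nz: "LL \<noteq> 0" using legendre_nz[OF c1] by simp

lemma RR_fin: "finite RR" using Rset_props[OF c1] by simp
lemma RR_card: "card RR = c" using Rset_props[OF c1] by simp
lemma RR_roots: "poly PP x = 0 \<longleftrightarrow> x \<in> RR" using Rset_props(3)[OF c1] by blast
lemma RR_sub: "x \<in> RR \<Longrightarrow> -1 < x \<and> x < 1" unfolding Rset_def by auto

lemma PP_prod: "PP = smult LL (\<Prod>s\<in>RR. [:-s,1:])"
proof -
  define Q where "Q = smult LL (\<Prod>s\<in>RR. [:-s,1:])"
  have nz: "(\<Prod>s\<in>RR. [:-s,1::real:]) \<noteq> 0" using RR_fin by (auto simp: prod_zero_iff)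
  have dQ: "degree Q = c" unfolding Q_def using LL_nz RR_fin RR_card
    by (simp add: degree_prod_sum_eq)
  have lQ: "lead_coeff Q = LL" unfolding Q_def using LL_nz by (simp add: lead_coeff_prod)
  have "degree (PP - Q) \<le> c" using dQ degree_legendre[of c] by (metis degree_diff_le_max max.idem)
  moreover have "coeff (PP - Q) c = 0" using lQ dQ degree_legendre[of c] by simp
  ultimately have dlt: "degree (PP - Q) < c" using c1 by (intro degree_lt_if_coeff0) auto
  have "PP - Q = 0"
  proof (rule ccontr)
    assume nz: "PP - Q \<noteq> 0"
    have "poly Q x = 0" if "x \<in> RR" for x
      unfolding Q_def using that RR_fin by (auto simp: poly_prod prod_zero_iff)
    then have "RR \<subseteq> {x. poly (PP - Q) x = 0}"
      using RR_roots by auto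
    then have "card RR \<le> card {x. poly (PP - Q) x = 0}"
      using poly_roots_finite[OF nz] by (intro card_mono)
    also have "\<dots> \<le> degree (PP - Q)" by (rule card_poly_roots_bound[OF nz])
    finally show False using dlt RR_card by simp
  qed
  then show ?thesis unfolding Q_def by simp
qed

lemma PP_ell:
  assumes a: "a \<in> RR" shows "PP = [:-a,1:] * ell a"
proof -
  have e: "(\<Prod>s\<in>RR. [:-s,1::real:]) = [:-a,1:] * (\<Prod>s\<in>RR-{a}. [:-s,1:])"
    by (rule prod.remove[OF RR_fin a])
  have "PP = smult LL (\<Prod>s\<in>RR. [:-s,1:])" by (rule PP_prod)
  also have "\<dots> = smult LL ([:-a,1:] * (\<Prod>s\<in>RR-{a}. [:-s,1:]))" by (simp only: e)
  also have "\<dots> = [:-a,1:] * ell a" unfolding ell_def by (simp only: mult_smult_right)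
  finally show ?thesis .
qed

lemma ell_nz: "ell a \<noteq> 0" unfolding ell_def using LL_nz RR_fin by (auto simp: prod_zero_iff)

lemma degree_ell: "a \<in> RR \<Longrightarrow> degree (ell a) = c - 1"
  unfolding ell_def using LL_nz RR_fin RR_card by (simp add: degree_prod_sum_eq)

lemma lead_ell: "lead_coeff (ell a) = LL"
  unfolding ell_def using LL_nz by (simp add: lead_coeff_prod)

lemma coeff_ell: "a \<in> RR \<Longrightarrow> coeff (ell a) (c - 1) = LL"
  using lead_ell[of a] degree_ell[of a] by simp

lemma poly_ell_self: "a \<in> RR \<Longrightarrow> poly (ell a) a \<noteq> 0"
  unfolding ell_def using LL_nz RR_fin by (auto simp: poly_prod)

lemma poly_ell_other: "a \<in> RR \<Longrightarrow> b \<in> RR \<Longrightarrow> b \<noteq> a \<Longrightarrow> poly (ell a) b = 0"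
  unfolding ell_def using RR_fin by (auto simp: poly_prod prod_zero_iff)

lemma pderiv_PP_at: "a \<in> RR \<Longrightarrow> poly (pderiv PP) a = poly (ell a) a"
proof -
  assume a: "a \<in> RR"
  have "pderiv PP = [:-a,1:] * pderiv (ell a) + ell a * pderiv [:-a,1:]"
    using PP_ell[OF a] pderiv_mult by metis
  moreover have "pderiv [:-a,1::real:] = 1" by (simp add: pderiv_pCons)
  ultimately show ?thesis by simp
qed

lemma pderiv_nz: "a \<in> RR \<Longrightarrow> poly (pderiv PP) a \<noteq> 0"
  using pderiv_PP_at poly_ell_self by simp

lemma lagrange:
  assumes "degree f < c"
  shows "f = (\<Sum>a\<in>RR. smult (poly f a / poly (ell a) a) (ell a))"
proof -
  define g where "g = (\<Sum>a\<in>RR. smult (poly f a / poly (ell a) a) (ell a))"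
  have dg: "degree g \<le> c - 1" unfolding g_def using RR_fin
    by (intro degree_sum_le) (auto intro: order.trans[OF degree_smult_le] simp: degree_ell)
  have pg: "poly g b = poly f b" if "b \<in> RR" for b
  proof -
    have "poly g b = (\<Sum>a\<in>RR. poly f a / poly (ell a) a * poly (ell a) b)"
      unfolding g_def by (simp add: poly_sum)
    also have "\<dots> = poly f b / poly (ell b) b * poly (ell b) b"
      using RR_fin that poly_ell_other by (intro sum_single) auto
    also have "\<dots> = poly f b" using poly_ell_self[OF that] by simp
    finally show ?thesis .
  qed
  have "f - g = 0"
  proof (rule ccontr)
    assume nz: "f - g \<noteq> 0"
    have "RR \<subseteq> {x. poly (f - g) x = 0}" using pg by auto
    then have "card RR \<le> card {x. poly (f - g) x = 0}"
      using poly_roots_finite[OF nz] by (intro card_mono)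
    also have "\<dots> \<le> degree (f - g)" by (rule card_poly_roots_bound[OF nz])
    also have "\<dots> \<le> max (degree f) (degree g)" by (rule degree_diff_le_max)
    also have "\<dots> < c" using assms dg c1 by auto
    finally show False using RR_card by simp
  qed
  then show ?thesis unfolding g_def by simp
qed

definition EE :: real where "EE = Ipol (PP * PP)"

lemma EE_pos: "EE > 0"
  unfolding EE_def using legendre_nz[OF c1] by (intro Ipol_pos) auto

lemma Ipol_lead:
  assumes "degree h \<le> c"
  shows "Ipol (PP * h) = coeff h c / LL * EE"
proof -
  define r where "r = h - smult (coeff h c / LL) PP"
  have "degree r \<le> c" unfolding r_def using assms degree_legendre[of c]
    by (metis degree_diff_le degree_smult_le order.trans)
  moreover have "coeff r c = 0" unfolding r_def using LL_nz degree_legendre[of c] by simp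
  ultimately have "degree r < c" using c1 by (intro degree_lt_if_coeff0)
  then have "Ipol (PP * r) = 0" by (rule legendre_orth)
  moreover have "PP * h = PP * r + smult (coeff h c / LL) (PP * PP)" unfolding r_def
    by (simp add: algebra_simps)
  ultimately show ?thesis unfolding EE_def by simp
qed

lemma key_identity:
  assumes a: "a \<in> RR"
  shows "(1 - a^2) * poly (pderiv PP) a * Ipol (ell a) = (2 * c + 1) * EE"
proof -
  define Lp where "Lp = [:1,0,-1:] * pderiv PP"
  have pLp: "poly Lp x = (1 - x^2) * poly (pderiv PP) x" for x
    unfolding Lp_def by (simp add: power2_eq_square algebra_simps)
  have dP': "degree (pderiv PP) = c - 1" by (simp add: degree_pderiv degree_legendre)
  have cP': "coeff (pderiv PP) (c - 1) = of_nat c * LL"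
    using c1 degree_legendre[of c] by (simp add: coeff_pderiv)
  have dLp: "degree Lp \<le> c + 1" unfolding Lp_def
    using degree_mult_le[of "[:1,0,-1::real:]" "pderiv PP"] dP' c1 by simp
  have cLp: "coeff Lp (c + 1) = - of_nat c * LL"
  proof -
    have "c + 1 = Suc (Suc (c - 1))" using c1 by simp
    then have "coeff Lp (c+1) = coeff (pderiv PP) (Suc (Suc (c - 1))) - coeff (pderiv PP) (c - 1)"
      unfolding Lp_def by (simp only: coeff_quad_mult)
    also have "coeff (pderiv PP) (Suc (Suc (c - 1))) = 0"
      using dP' by (intro coeff_eq_0) simp
    finally show ?thesis using cP' by simp
  qed
  define Lc where "Lc = Lp - [:poly Lp a:]"
  have "poly Lc a = 0" unfolding Lc_def by simp
  then obtain Q where Q: "Lc = [:-a,1:] * Q" by (auto simp: poly_eq_0_iff_dvd elim: dvdE)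
  have Qnz: "Q \<noteq> 0"
  proof
    assume "Q = 0"
    then have "Lc = 0" using Q by simp
    then have "coeff Lc (c+1) = 0" by simp
    moreover have "coeff Lc (c+1) = coeff Lp (c+1)" unfolding Lc_def by simp
    ultimately show False using cLp LL_nz c1 by simp
  qed
  have dLc: "degree Lc \<le> c + 1" unfolding Lc_def using dLp
    by (metis degree_diff_le degree_pCons_0 le_zero_eq zero_le)
  have "degree Lc = 1 + degree Q" unfolding Q using Qnz by (subst degree_mult_eq) auto
  then have dQ: "degree Q \<le> c" using dLc by simp
  have cQ: "coeff Q c = - of_nat c * LL"
  proof -
    have "coeff Lc (Suc c) = coeff Q c - a * coeff Q (Suc c)" unfolding Q
      by (simp add: mult_pCons_left)
    moreover have "coeff Q (Suc c) = 0" using dQ by (intro coeff_eq_0) simp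
    moreover have "coeff Lc (Suc c) = coeff Lp (c+1)" unfolding Lc_def by simp
    ultimately show ?thesis using cLp by simp
  qed
  have PQ: "PP * Q = ell a * Lp - smult (poly Lp a) (ell a)"
  proof -
    have "PP * Q = ell a * ([:-a,1:] * Q)" by (subst PP_ell[OF a]) (simp only: ac_simps)
    also have "\<dots> = ell a * Lc" using Q by simp
    finally show ?thesis unfolding Lc_def by (simp add: algebra_simps)
  qed
  have I1: "Ipol (PP * Q) = - of_nat c * EE"
    using Ipol_lead[OF dQ] cQ LL_nz by simp
  define m where "m = [:1,0,-1:] * ell a"
  have pm: "poly m 1 = 0" "poly m (-1) = 0" unfolding m_def by simp_all
  have "Ipol (pderiv (m * PP)) = 0" by (simp add: Ipol_pderiv pm)
  then have ibp: "Ipol (m * pderiv PP) = - Ipol (PP * pderiv m)" by (simp add: pderiv_mult)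
  have mLp: "m * pderiv PP = ell a * Lp" unfolding m_def Lp_def by (simp only: ac_simps)
  have dell: "degree (ell a) = c - 1" using degree_ell[OF a] .
  have dm: "degree m \<le> c + 1" unfolding m_def
    using degree_mult_le[of "[:1,0,-1::real:]" "ell a"] dell c1 by simp
  have cm: "coeff m (c + 1) = - LL"
  proof -
    have "c + 1 = Suc (Suc (c - 1))" using c1 by simp
    then have "coeff m (c+1) = coeff (ell a) (Suc (Suc (c - 1))) - coeff (ell a) (c - 1)"
      unfolding m_def by (simp only: coeff_quad_mult)
    also have "coeff (ell a) (Suc (Suc (c - 1))) = 0" using dell by (intro coeff_eq_0) simp
    finally show ?thesis using coeff_ell[OF a] by simp
  qed
  have dpm: "degree (pderiv m) \<le> c" using dm by (simp add: degree_pderiv)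
  have cpm: "coeff (pderiv m) c = - (of_nat c + 1) * LL"
    using cm by (simp add: coeff_pderiv algebra_simps)
  have I2: "Ipol (ell a * Lp) = (of_nat c + 1) * EE"
  proof -
    have "(- (of_nat c + 1) * LL) / LL = - (of_nat c + 1)" using LL_nz by (rule nonzero_mult_div_cancel_right)
    then have "Ipol (PP * pderiv m) = - (of_nat c + 1) * EE" using Ipol_lead[OF dpm] cpm by simp
    then show ?thesis using ibp mLp by (simp add: algebra_simps)
  qed
  have "poly Lp a * Ipol (ell a) = Ipol (ell a * Lp) - Ipol (PP * Q)"
    using PQ by simp
  also have "\<dots> = (2 * c + 1) * EE" using I1 I2 by (simp add: algebra_simps)
  finally show ?thesis using pLp by simp
qed

definition KK :: real where "KK = (2 * c + 1) * EE / 2"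
definition mu :: "real \<Rightarrow> real" where
  "mu a = 2 / ((1 - a^2) * (poly (pderiv PP) a)^2)"

lemma KK_pos: "KK > 0" unfolding KK_def using EE_pos by simp

lemma mu_pos: "a \<in> RR \<Longrightarrow> mu a > 0"
proof -
  assume a: "a \<in> RR"
  have "a^2 < 1" using RR_sub[OF a] abs_square_less_1[of a] by (simp add: abs_less_iff)
  then show ?thesis unfolding mu_def using pderiv_nz[OF a]
    by (intro divide_pos_pos mult_pos_pos) auto
qed

lemma weight_eq: "a \<in> RR \<Longrightarrow> Ipol (ell a) / poly (ell a) a = KK * mu a"
proof -
  assume a: "a \<in> RR"
  have d: "poly (pderiv PP) a \<noteq> 0" using pderiv_nz[OF a] .
  have "a^2 < 1" using RR_sub[OF a] abs_square_less_1[of a] by (simp add: abs_less_iff)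
  then have s: "1 - a^2 \<noteq> 0" by simp
  have I: "Ipol (ell a) = (2 * c + 1) * EE / ((1 - a^2) * poly (ell a) a)"
    using key_identity[OF a] d s pderiv_PP_at[OF a] by (simp add: field_simps)
  have d': "poly (ell a) a \<noteq> 0" using poly_ell_self[OF a] .
  show ?thesis unfolding I KK_def mu_def pderiv_PP_at[OF a]
    using d' s by (simp add: field_simps power2_eq_square)
qed

theorem gauss_quadrature:
  assumes "degree f < 2 * c"
  shows "Ipol f = KK * (\<Sum>a\<in>RR. mu a * poly f a)"
proof -
  define q where "q = f div PP"
  define r where "r = f mod PP"
  have fqr: "f = PP * q + r" unfolding q_def r_def by (simp add: mult.commute)
  have Pnz: "PP \<noteq> 0" using legendre_nz[OF c1] .
  have dr: "degree r < c"
    using degree_mod_less[OF Pnz, of f] degree_legendre[of c] c1 unfolding r_def by auto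
  have dq: "degree q < c"
  proof (cases "q = 0")
    case True then show ?thesis using c1 by simp
  next
    case False
    have "degree (PP * q) = c + degree q" using False Pnz degree_legendre[of c]
      by (simp add: degree_mult_eq)
    moreover have "PP * q = f - r" using fqr by simp
    moreover have "degree (f - r) \<le> max (degree f) (degree r)" by (rule degree_diff_le_max)
    ultimately show ?thesis using assms dr by auto
  qed
  have "Ipol f = Ipol r" using fqr legendre_orth[OF dq] by simp
  also have "\<dots> = Ipol (\<Sum>a\<in>RR. smult (poly r a / poly (ell a) a) (ell a))"
    using lagrange[OF dr] by simp
  also have "\<dots> = (\<Sum>a\<in>RR. poly r a * (Ipol (ell a) / poly (ell a) a))"
    by (simp add: Ipol_sum)
  also have "\<dots> = (\<Sum>a\<in>RR. poly r a * (KK * mu a))"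
    by (intro sum.cong) (auto simp: weight_eq)
  also have "\<dots> = KK * (\<Sum>a\<in>RR. mu a * poly f a)"
  proof -
    have "poly f a = poly r a" if "a \<in> RR" for a
      using fqr RR_roots[of a] that by simp
    then show ?thesis by (simp add: sum_distrib_left ac_simps)
  qed
  finally show ?thesis .
qed

end

definition SS :: "nat \<Rightarrow> (real \<Rightarrow> real) \<Rightarrow> real" where
  "SS c f = KK c * (\<Sum>a\<in>Rset c. mu c a * f a)"

lemma SS_poly: "c \<ge> 1 \<Longrightarrow> degree p < 2 * c \<Longrightarrow> SS c (\<lambda>x. poly p x) = Ipol p"
  unfolding SS_def using gauss_quadrature[of c p] by simp

lemma SS_mono:
  assumes "c \<ge> 1" "\<And>a. a \<in> Rset c \<Longrightarrow> f a \<le> g a"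
  shows "SS c f \<le> SS c g"
  unfolding SS_def using assms KK_pos[OF assms(1)] mu_pos[OF assms(1)]
  by (intro mult_left_mono sum_mono mult_left_mono) (auto intro: less_imp_le)

lemma SS_add: "SS c (\<lambda>x. f x + g x) = SS c f + SS c g"
  unfolding SS_def by (simp add: sum.distrib distrib_left)

lemma SS_diff: "SS c (\<lambda>x. f x - g x) = SS c f - SS c g"
  unfolding SS_def by (simp add: sum_subtractf right_diff_distrib)

lemma SS_cmult: "SS c (\<lambda>x. k * f x) = k * SS c f"
  unfolding SS_def by (simp add: sum_distrib_left ac_simps)

lemma SS_const: "c \<ge> 1 \<Longrightarrow> SS c (\<lambda>x. k) = 2 * k"
proof -
  assume c: "c \<ge> 1"
  have "SS c (\<lambda>x. poly [:k:] x) = Ipol [:k:]" using c by (intro SS_poly) auto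
  moreover have "Ipol [:k:] = 2 * k"
  proof -
    have e: "(\<lambda>x. poly [:k:] x) = (\<lambda>x::real. k)" by auto
    show ?thesis unfolding Ipol_def e by simp
  qed
  ultimately show ?thesis by simp
qed

lemma SS_nonneg: "c \<ge> 1 \<Longrightarrow> (\<And>a. a \<in> Rset c \<Longrightarrow> 0 \<le> f a) \<Longrightarrow> 0 \<le> SS c f"
  using SS_mono[of c "\<lambda>x. 0" f] SS_const[of c 0] by simp

lemma weierstrass_poly:
  fixes f :: "real \<Rightarrow> real"
  assumes "continuous_on {-1..1} f" "e > 0"
  obtains p where "\<And>x. x \<in> {-1..1} \<Longrightarrow> \<bar>f x - poly p x\<bar> < e"
proof -
  obtain g where g: "real_polynomial_function g" "\<And>x. x \<in> {-1..1} \<Longrightarrow> \<bar>f x - g x\<bar> < e"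
    using Stone_Weierstrass_real_polynomial_function[of "{-1..1::real}" f e] assms by auto
  obtain a n where gs: "g = (\<lambda>x. \<Sum>i\<le>n. a i * x^i)"
    using g(1) real_polynomial_function_iff_sum by auto
  define p where "p = (\<Sum>i\<le>n. monom (a i) i)"
  have pg: "poly p x = g x" for x unfolding p_def gs by (simp add: poly_sum poly_monom)
  show ?thesis by (rule that[of p]) (use g(2) pg in auto)
qed

lemma weak_conv:
  assumes cf: "continuous_on {-1..1} f"
  shows "(\<lambda>c. SS c f) \<longlonglongrightarrow> integral {-1..1} f"
proof (rule LIMSEQ_I)
  fix r :: real assume r: "r > 0"
  define e where "e = r / 5"
  have e: "e > 0" unfolding e_def using r by simp
  obtain p where p: "\<And>x. x \<in> {-1..1} \<Longrightarrow> \<bar>f x - poly p x\<bar> < e"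
    using weierstrass_poly[OF cf e] by blast
  have fint: "f integrable_on {-1..1}" using cf integrable_continuous_real by blast
  have pb: "\<And>x. x \<in> {-1..1} \<Longrightarrow> f x \<le> poly p x + e \<and> poly p x - e \<le> f x"
    using p by (force simp: abs_less_iff)
  have I1: "\<bar>integral {-1..1} f - Ipol p\<bar> \<le> 2 * e"
  proof -
    have "integral {-1..1} f \<le> integral {-1..1} (\<lambda>x. poly p x + e)"
      using pb fint by (intro integral_le) (auto intro!: integrable_add)
    moreover have "integral {-1..1} (\<lambda>x. poly p x - e) \<le> integral {-1..1} f"
      using pb fint by (intro integral_le) (auto intro!: integrable_diff)
    moreover have "integral {-1..1} (\<lambda>x. poly p x + e) = Ipol p + 2 * e"
      unfolding Ipol_def by (subst integral_add) auto
    moreover have "integral {-1..1} (\<lambda>x. poly p x - e) = Ipol p - 2 * e"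
      unfolding Ipol_def by (subst integral_diff) auto
    ultimately show ?thesis by linarith
  qed
  show "\<exists>no. \<forall>n\<ge>no. norm (SS n f - integral {-1..1} f) < r"
  proof (intro exI[of _ "degree p + 1"] allI impI)
    fix n assume n: "n \<ge> degree p + 1"
    then have n1: "n \<ge> 1" by simp
    have sp: "SS n (\<lambda>x. poly p x) = Ipol p" using n by (intro SS_poly) auto
    have "SS n f \<le> SS n (\<lambda>x. poly p x + e)"
      using pb RR_sub[OF n1] by (intro SS_mono[OF n1]) (auto simp: less_imp_le)
    moreover have "SS n (\<lambda>x. poly p x - e) \<le> SS n f"
      using pb RR_sub[OF n1] by (intro SS_mono[OF n1]) (auto simp: less_imp_le)
    moreover have "SS n (\<lambda>x. poly p x + e) = Ipol p + 2 * e"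
      using SS_add[of n "\<lambda>x. poly p x" "\<lambda>x. e"] sp SS_const[OF n1] by simp
    moreover have "SS n (\<lambda>x. poly p x - e) = Ipol p - 2 * e"
      using SS_diff[of n "\<lambda>x. poly p x" "\<lambda>x. e"] sp SS_const[OF n1] by simp
    ultimately have "\<bar>SS n f - Ipol p\<bar> \<le> 2 * e" by linarith
    then show "norm (SS n f - integral {-1..1} f) < r" using I1 e r unfolding e_def real_norm_def
      by (simp only: abs_le_iff abs_less_iff) linarith
  qed
qed

lemma poly_PP_nz_outside:
  assumes "c \<ge> 1" "\<bar>w\<bar> \<ge> 1"
  shows "poly (legendre c) w \<noteq> 0"
  using RR_roots[OF assms(1), of w] RR_sub[OF assms(1), of w] assms(2) by auto

lemma cauchy_poly:
  assumes c: "c \<ge> 1" and w: "poly (legendre c) w \<noteq> 0"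
  obtains T where "degree T < 2 * c"
    "\<And>x. x \<noteq> w \<Longrightarrow> poly T x = (1 - (poly (legendre c) x / poly (legendre c) w)^2) / (w - x)"
proof -
  define P where "P = legendre c"
  define D where "D = [:(poly P w)^2:] - P^2"
  have "poly D w = 0" unfolding D_def by simp
  then obtain T0 where T0: "D = [:-w,1:] * T0" by (auto simp: poly_eq_0_iff_dvd elim: dvdE)
  have dD: "degree D \<le> 2 * c"
  proof -
    have "degree (P^2) = 2 * c" unfolding P_def using legendre_nz[OF c] degree_legendre[of c]
      by (simp add: degree_power_eq)
    then show ?thesis unfolding D_def using degree_diff_le_max[of "[:(poly P w)^2:]" "P^2"] by simp
  qed
  have dT0: "degree T0 < 2 * c"
  proof (cases "T0 = 0")
    case True then show ?thesis using c by simp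
  next
    case False
    then have "degree D = 1 + degree T0" unfolding T0 by (subst degree_mult_eq) auto
    then show ?thesis using dD by simp
  qed
  define T where "T = smult (-1 / (poly P w)^2) T0"
  have "degree T < 2 * c" unfolding T_def using dT0 by (meson degree_smult_le le_less_trans)
  moreover have "poly T x = (1 - (poly P x / poly P w)^2) / (w - x)" if "x \<noteq> w" for x
  proof -
    define A where "A = poly P x"
    define B where "B = poly P w"
    define t where "t = poly T0 x"
    have B: "B \<noteq> 0" unfolding B_def P_def using w .
    have wx: "w - x \<noteq> 0" using that by simp
    have "poly D x = (x - w) * poly T0 x" unfolding T0 by (simp add: algebra_simps)
    then have h: "(x - w) * t = B^2 - A^2" unfolding D_def A_def B_def t_def by simp
    have "(1 - (A / B)^2) / (w - x) = (B^2 - A^2) / (B^2 * (w - x))"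
      using B wx by (simp add: field_simps)
    also have "\<dots> = ((x - w) * t) / (B^2 * (w - x))" using h by simp
    also have "\<dots> = - t / B^2" using B wx by (simp add: field_simps)
    finally have "(1 - (A / B)^2) / (w - x) = - t / B^2" .
    then show ?thesis unfolding T_def A_def B_def t_def by simp
  qed
  ultimately show ?thesis using that unfolding P_def by blast
qed

lemma integral_inv_minus:
  fixes z :: real
  assumes "z > 1"
  shows "integral {-1..1} (\<lambda>x. 1 / (z - x)) = ln ((z + 1) / (z - 1))"
proof -
  have "((\<lambda>x. 1 / (z - x)) has_integral (- ln (z - 1) - - ln (z - (-1)))) {-1..1}"
  proof (rule fundamental_theorem_of_calculus[of "-1" 1 "\<lambda>x. - ln (z - x)" "\<lambda>x. 1/(z-x)"])
    fix x :: real assume x: "x \<in> {-1..1}"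
    then have zx: "z - x > 0" using assms by auto
    have "((\<lambda>x. - ln (z - x)) has_real_derivative (1 / (z - x))) (at x)"
      using zx by (auto intro!: derivative_eq_intros simp: field_simps)
    then show "((\<lambda>x. - ln (z - x)) has_vector_derivative 1 / (z - x)) (at x within {-1..1})"
      by (simp add: has_real_derivative_iff_has_vector_derivative[symmetric] has_field_derivative_at_within)
  qed simp
  then show ?thesis using assms by (simp add: integral_unique ln_div)
qed

lemma integral_inv_plus:
  fixes z :: real
  assumes "z > 1"
  shows "integral {-1..1} (\<lambda>x. 1 / (z + x)) = ln ((z + 1) / (z - 1))"
proof -
  have "((\<lambda>x. 1 / (z + x)) has_integral (ln (z + 1) - ln (z + (-1)))) {-1..1}"
  proof (rule fundamental_theorem_of_calculus[of "-1" 1 "\<lambda>x. ln (z + x)" "\<lambda>x. 1/(z+x)"])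
    fix x :: real assume x: "x \<in> {-1..1}"
    then have zx: "z + x > 0" using assms by auto
    have "((\<lambda>x. ln (z + x)) has_real_derivative (1 / (z + x))) (at x)"
      using zx by (auto intro!: derivative_eq_intros simp: field_simps)
    then show "((\<lambda>x. ln (z + x)) has_vector_derivative 1 / (z + x)) (at x within {-1..1})"
      by (simp add: has_real_derivative_iff_has_vector_derivative[symmetric] has_field_derivative_at_within)
  qed simp
  then show ?thesis using assms by (simp add: integral_unique ln_div)
qed

lemma kernel_minus:
  assumes c: "c \<ge> 1" and z: "z > 1"
  shows "SS c (\<lambda>x. 1 / (z - x)) \<le> ln ((z + 1) / (z - 1))"
proof -
  have w: "poly (legendre c) z \<noteq> 0" using poly_PP_nz_outside[OF c] z by simp
  obtain T where T: "degree T < 2 * c"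
    "\<And>x. x \<noteq> z \<Longrightarrow> poly T x = (1 - (poly (legendre c) x / poly (legendre c) z)^2) / (z - x)"
    using cauchy_poly[OF c w] by blast
  have "SS c (\<lambda>x. 1 / (z - x)) = SS c (\<lambda>x. poly T x)"
  proof -
    have "\<And>a. a \<in> Rset c \<Longrightarrow> poly T a = 1 / (z - a)"
      using T(2) RR_roots[OF c] RR_sub[OF c] z by fastforce
    then show ?thesis unfolding SS_def by (intro arg_cong2[where f="(*)"] refl sum.cong) auto
  qed
  also have "\<dots> = Ipol T" using SS_poly[OF c T(1)] .
  also have "\<dots> \<le> integral {-1..1} (\<lambda>x. 1 / (z - x))"
    unfolding Ipol_def
  proof (rule integral_le)
    show "(\<lambda>x. 1 / (z - x)) integrable_on {-1..1}"
      using z by (intro integrable_continuous_real continuous_intros) auto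
    fix x :: real assume x: "x \<in> {-1..1}"
    then have zx: "z - x > 0" "x \<noteq> z" using z by auto
    have "poly T x = 1 / (z - x) - (poly (legendre c) x / poly (legendre c) z)^2 / (z - x)"
      using T(2)[OF zx(2)] by (simp add: diff_divide_distrib)
    moreover have "(poly (legendre c) x / poly (legendre c) z)^2 / (z - x) \<ge> 0" using zx by simp
    ultimately show "poly T x \<le> 1 / (z - x)" by linarith
  qed simp
  also have "\<dots> = ln ((z + 1) / (z - 1))" using integral_inv_minus[OF z] .
  finally show ?thesis .
qed

lemma kernel_plus:
  assumes c: "c \<ge> 1" and z: "z > 1"
  shows "SS c (\<lambda>x. 1 / (z + x)) \<le> ln ((z + 1) / (z - 1))"
proof -
  have w: "poly (legendre c) (-z) \<noteq> 0" using poly_PP_nz_outside[OF c] z by simp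
  obtain T where T: "degree T < 2 * c"
    "\<And>x. x \<noteq> -z \<Longrightarrow> poly T x = (1 - (poly (legendre c) x / poly (legendre c) (-z))^2) / (-z - x)"
    using cauchy_poly[OF c w] by blast
  have dT: "degree (-T) < 2 * c" using T(1) by simp
  have mT: "poly (-T) x = (1 - (poly (legendre c) x / poly (legendre c) (-z))^2) / (z + x)" if "x \<noteq> -z" for x
  proof -
    have "-z - x = -(z + x)" by simp
    then show ?thesis using T(2)[OF that] by (simp add: minus_divide_right)
  qed
  have "SS c (\<lambda>x. 1 / (z + x)) = SS c (\<lambda>x. poly (-T) x)"
  proof -
    have "\<And>a. a \<in> Rset c \<Longrightarrow> poly (-T) a = 1 / (z + a)"
    proof -
      fix a assume a: "a \<in> Rset c"
      then have "-1 < a" using RR_sub[OF c] by auto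
      then have "a \<noteq> -z" "poly (legendre c) a = 0" using RR_roots[OF c] a z by auto
      then show "poly (-T) a = 1 / (z + a)" using mT[of a] by simp
    qed
    then show ?thesis unfolding SS_def by (intro arg_cong2[where f="(*)"] refl sum.cong) auto
  qed
  also have "\<dots> = Ipol (-T)" using SS_poly[OF c dT] .
  also have "\<dots> \<le> integral {-1..1} (\<lambda>x. 1 / (z + x))"
    unfolding Ipol_def
  proof (rule integral_le)
    show "(\<lambda>x. 1 / (z + x)) integrable_on {-1..1}"
      using z by (intro integrable_continuous_real continuous_intros) auto
    fix x :: real assume x: "x \<in> {-1..1}"
    then have zx: "z + x > 0" "x \<noteq> -z" using z by auto
    have "poly (-T) x = 1 / (z + x) - (poly (legendre c) x / poly (legendre c) (-z))^2 / (z + x)"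
      using mT[OF zx(2)] by (simp add: diff_divide_distrib)
    moreover have "(poly (legendre c) x / poly (legendre c) (-z))^2 / (z + x) \<ge> 0" using zx by simp
    ultimately show "poly (-T) x \<le> 1 / (z + x)" by linarith
  qed simp
  also have "\<dots> = ln ((z + 1) / (z - 1))" using integral_inv_plus[OF z] .
  finally show ?thesis .
qed

lemma kernel_sym:
  assumes c: "c \<ge> 1" and s: "0 < s" "s \<le> 1"
  shows "SS c (\<lambda>x. 1 / (1 - x^2 + s)) \<le> ln (7 / s)"
proof -
  define t where "t = s / 3"
  define z where "z = 1 + t"
  have t: "0 < t" "t \<le> 1/3" using s unfolding t_def by auto
  have z: "z > 1" unfolding z_def using t by simp
  have "SS c (\<lambda>x. 1 / (1 - x^2 + s)) \<le> SS c (\<lambda>x. (1/2) * (1 / (z - x)) + (1/2) * (1 / (z + x)))"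
  proof (rule SS_mono[OF c])
    fix a assume "a \<in> Rset c"
    then have a: "-1 < a" "a < 1" using RR_sub[OF c] by auto
    have za: "z - a > 0" "z + a > 0" using a z by auto
    have y: "1 - a^2 > 0" using a by (simp add: abs_square_less_1 abs_less_iff)
    have "(1/2) * (1 / (z - a)) + (1/2) * (1 / (z + a)) = z / ((z - a) * (z + a))"
      using za by (simp add: divide_simps) (simp add: algebra_simps)
    also have "(z - a) * (z + a) = 1 - a^2 + 2 * t + t^2" unfolding z_def by (simp add: power2_eq_square algebra_simps)
    finally have e: "(1/2) * (1 / (z - a)) + (1/2) * (1 / (z + a)) = z / (1 - a^2 + 2 * t + t^2)" .
    have "s * s \<le> s * 1" using s by (intro mult_left_mono) auto
    then have "s * s \<le> s" by simp
    moreover have "(s / 3) * (s / 3) = (s * s) / 9" by simp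
    ultimately have "1 - a^2 + 2 * t + t^2 \<le> 1 - a^2 + s" unfolding t_def power2_eq_square using s by linarith
    moreover have "0 < 1 - a^2 + 2 * t + t^2" using y t by (simp add: add_pos_nonneg)
    ultimately have "1 / (1 - a^2 + s) \<le> 1 / (1 - a^2 + 2 * t + t^2)"
      by (intro divide_left_mono) auto
    also have "\<dots> \<le> z / (1 - a^2 + 2 * t + t^2)"
      using z \<open>0 < 1 - a^2 + 2 * t + t^2\<close> by (intro divide_right_mono) auto
    finally show "1 / (1 - a^2 + s) \<le> (1/2) * (1 / (z - a)) + (1/2) * (1 / (z + a))" using e by simp
  qed
  also have "\<dots> = (1/2) * SS c (\<lambda>x. 1 / (z - x)) + (1/2) * SS c (\<lambda>x. 1 / (z + x))"
    by (simp only: SS_add SS_cmult)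
  also have "\<dots> \<le> (1/2) * ln ((z + 1) / (z - 1)) + (1/2) * ln ((z + 1) / (z - 1))"
    using kernel_minus[OF c z] kernel_plus[OF c z] by linarith
  also have "\<dots> = ln ((z + 1) / (z - 1))" by simp
  also have "\<dots> \<le> ln (7 / s)"
  proof -
    have "(z + 1) / (z - 1) = (6 + s) / s" unfolding z_def t_def using s by (simp add: field_simps)
    also have "\<dots> \<le> 7 / s" using s by (intro divide_right_mono) auto
    finally show ?thesis using z s by (subst ln_le_cancel_iff) auto
  qed
  finally show ?thesis .
qed

definition gfun :: "real \<Rightarrow> real" where "gfun x = 1 / sqrt (1 - x^2)"

definition bseq :: "nat \<Rightarrow> real" where "bseq n = (1/2)^n * (ln 7 + real n * ln 4)"

lemma bseq_nonneg: "bseq n \<ge> 0" unfolding bseq_def by simp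

lemma summable_bseq: "summable bseq"
proof (rule summable_ratio_test[of "3/4" 2])
  fix n :: nat assume n: "n \<ge> 2"
  have l7: "ln (7::real) \<ge> 0" "ln (4::real) \<ge> 0" by simp_all
  have "ln 7 + real (Suc n) * ln 4 \<le> (3/2) * (ln 7 + real n * ln 4)"
  proof -
    have "1 \<le> real n / 2" using n by simp
    from mult_right_mono[OF this l7(2)] have "ln 4 \<le> real n / 2 * ln 4" by simp
    then have h: "ln 4 \<le> (real n * ln 4) / 2" by simp
    have e1: "real (Suc n) * ln 4 = real n * ln 4 + ln 4" by (simp add: algebra_simps)
    have e2: "(3/2) * (ln 7 + real n * ln 4) = 3/2*ln 7 + 3/2*(real n * ln 4)" by (simp add: algebra_simps)
    show ?thesis using h e1 e2 l7 by linarith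
  qed
  then have "(1/2)^(Suc n) * (ln 7 + real (Suc n) * ln 4) \<le> (1/2)^(Suc n) * ((3/2) * (ln 7 + real n * ln 4))"
    by (intro mult_left_mono) auto
  also have "\<dots> = 3/4 * ((1/2)^n * (ln 7 + real n * ln 4))" by simp
  finally show "norm (bseq (Suc n)) \<le> 3/4 * norm (bseq n)"
    using bseq_nonneg[of n] bseq_nonneg[of "Suc n"] unfolding bseq_def by simp
qed simp

definition tk :: "nat \<Rightarrow> nat \<Rightarrow> real \<Rightarrow> real" where
  "tk J j y = (1/2)^(j+J) / (y + (1/4)^(j+J))"

lemma tk_nonneg: "y \<ge> 0 \<Longrightarrow> tk J j y \<ge> 0" unfolding tk_def by simp

lemma summable_tk:
  assumes "y > 0" shows "summable (\<lambda>j. tk J j y)"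
proof (rule summable_comparison_test)
  show "\<exists>N. \<forall>n\<ge>N. norm (tk J n y) \<le> (1/2)^J / y * (1/2)^n"
  proof (intro exI allI impI)
    fix n :: nat
    have "tk J n y \<le> (1/2)^(n+J) / y" unfolding tk_def using assms
      by (intro divide_left_mono) (auto intro!: mult_pos_pos add_pos_pos)
    also have "\<dots> = (1/2)^J / y * (1/2)^n" by (simp add: power_add)
    finally show "norm (tk J n y) \<le> (1/2)^J / y * (1/2)^n"
      using tk_nonneg[of y J n] assms by simp
  qed
  show "summable (\<lambda>n. (1/2::real)^J / y * (1/2)^n)"
    by (intro summable_mult summable_geometric) simp
qed

lemma bin_exists:
  fixes y :: real
  assumes "0 < y" "y \<le> (1/4)^J"
  shows "\<exists>j\<ge>J. (1/4)^(Suc j) < y \<and> y \<le> (1/4)^j"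
proof -
  have ex: "\<exists>n. (1/4::real)^n < y" using real_arch_pow_inv[OF assms(1), of "1/4"] by simp
  define m where "m = (LEAST n. (1/4::real)^n < y)"
  have m: "(1/4::real)^m < y" unfolding m_def using LeastI_ex[OF ex] .
  have mJ: "m > J"
  proof (rule ccontr)
    assume "\<not> m > J"
    then have "(1/4::real)^J \<le> (1/4)^m" by (intro power_decreasing) auto
    then show False using m assms by linarith
  qed
  define j where "j = m - 1"
  have mj: "m = Suc j" unfolding j_def using mJ by simp
  have "\<not> (1/4::real)^j < y" unfolding m_def
    by (rule not_less_Least) (use mj m_def in simp)
  then show ?thesis using m mj mJ by (intro exI[of _ j]) auto
qed

lemma g_le_series:
  assumes "0 < y" "y \<le> (1/4)^J"
  shows "1 / sqrt y \<le> 4 * (\<Sum>j. tk J j y)"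
proof -
  obtain j where j: "j \<ge> J" "(1/4)^(Suc j) < y" "y \<le> (1/4)^j" using bin_exists[OF assms] by blast
  define s where "s = (1/2::real)^j"
  have s: "s > 0" "s^2 = (1/4)^j" unfolding s_def by (simp_all add: power_mult_distrib[symmetric] power2_eq_square power_mult[symmetric] mult.commute)
  have ys: "(s/2)^2 < y" using j(2) s(2) by (simp add: power_divide power2_eq_square)
  have "s/2 < sqrt y" using ys s
    by (metis abs_of_pos half_gt_zero real_less_rsqrt)
  moreover have "sqrt y > 0" using assms by simp
  ultimately have "1 / sqrt y < 2 / s" using s by (simp add: field_simps)
  also have "2 / s = 4 * s / (2 * s^2)" using s by (simp add: field_simps power2_eq_square)
  also have "\<dots> \<le> 4 * s / (y + s^2)" using j(3) s assms
    by (intro divide_left_mono) auto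
  also have "\<dots> = 4 * tk J (j - J) y" unfolding tk_def s_def using j(1)
    by (simp add: power_mult_distrib[symmetric] power2_eq_square power_mult[symmetric])
  also have "tk J (j - J) y \<le> (\<Sum>j. tk J j y)"
    using sum_le_suminf[OF summable_tk[OF assms(1)], of "{j - J}"] tk_nonneg[of y J] assms by auto
  finally show ?thesis by simp
qed

lemma SS_sums:
  assumes "\<And>a. a \<in> Rset c \<Longrightarrow> summable (\<lambda>j. F j a)"
  shows "(\<lambda>j. SS c (F j)) sums SS c (\<lambda>x. \<Sum>j. F j x)"
  unfolding SS_def
proof (rule sums_mult)
  show "(\<lambda>j. \<Sum>a\<in>Rset c. mu c a * F j a) sums (\<Sum>a\<in>Rset c. mu c a * (\<Sum>j. F j a))"
  proof (rule sums_sum)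
    fix a assume "a \<in> Rset c"
    then show "(\<lambda>j. mu c a * F j a) sums (mu c a * (\<Sum>j. F j a))"
      using assms by (intro sums_mult summable_sums) auto
  qed
qed

lemma ln_bseq: "(1/2::real)^n * ln (7 / (1/4)^n) = bseq n"
proof -
  have "ln (7 / (1/4::real)^n) = ln 7 + real n * ln 4"
    by (simp add: power_one_over ln_mult ln_realpow)
  then show ?thesis unfolding bseq_def by simp
qed

lemma tail_bound:
  assumes c: "c \<ge> 1"
  shows "SS c (\<lambda>x. if 1 - x^2 \<le> (1/4)^J then gfun x else 0) \<le> 4 * (\<Sum>j. bseq (j + J))"
proof -
  have pos: "1 - a^2 > 0" if "a \<in> Rset c" for a
    using RR_sub[OF c that] abs_square_less_1[of a] by (simp add: abs_less_iff)
  have "SS c (\<lambda>x. if 1 - x^2 \<le> (1/4)^J then gfun x else 0)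
      \<le> SS c (\<lambda>x. 4 * (\<Sum>j. tk J j (1 - x^2)))"
  proof (rule SS_mono[OF c])
    fix a assume a: "a \<in> Rset c"
    have nn: "0 \<le> (\<Sum>j. tk J j (1 - a^2))"
      using summable_tk[OF pos[OF a]] tk_nonneg pos[OF a] by (intro suminf_nonneg) auto
    show "(if 1 - a^2 \<le> (1/4)^J then gfun a else 0) \<le> 4 * (\<Sum>j. tk J j (1 - a^2))"
      using g_le_series[OF pos[OF a]] nn unfolding gfun_def by auto
  qed
  also have "SS c (\<lambda>x. 4 * (\<Sum>j. tk J j (1 - x^2))) = 4 * SS c (\<lambda>x. \<Sum>j. tk J j (1 - x^2))"
    by (rule SS_cmult)
  also have "SS c (\<lambda>x. \<Sum>j. tk J j (1 - x^2)) = (\<Sum>j. SS c (\<lambda>x. tk J j (1 - x^2)))"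
    using SS_sums[of c "\<lambda>j x. tk J j (1 - x^2)"] summable_tk pos by (auto simp: sums_iff)
  also have "(\<Sum>j. SS c (\<lambda>x. tk J j (1 - x^2))) \<le> (\<Sum>j. bseq (j + J))"
  proof (rule suminf_le)
    fix j
    have "SS c (\<lambda>x. tk J j (1 - x^2)) = (1/2)^(j+J) * SS c (\<lambda>x. 1 / (1 - x^2 + (1/4)^(j+J)))"
      unfolding tk_def using SS_cmult[of c "(1/2)^(j+J)" "\<lambda>x. 1 / (1 - x^2 + (1/4)^(j+J))"]
      by simp
    also have "\<dots> \<le> (1/2)^(j+J) * ln (7 / (1/4)^(j+J))"
      using kernel_sym[OF c, of "(1/4)^(j+J)"] by (intro mult_left_mono) (auto simp: power_le_one)
    also have "\<dots> = bseq (j + J)" by (rule ln_bseq)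
    finally show "SS c (\<lambda>x. tk J j (1 - x^2)) \<le> bseq (j + J)" .
  next
    show "summable (\<lambda>j. SS c (\<lambda>x. tk J j (1 - x^2)))"
      using SS_sums[of c "\<lambda>j x. tk J j (1 - x^2)"] summable_tk pos by (auto simp: sums_iff)
    show "summable (\<lambda>j. bseq (j + J))" by (rule summable_ignore_initial_segment[OF summable_bseq])
  qed
  finally show ?thesis by simp
qed

lemma tail_small:
  assumes "e > 0"
  shows "\<exists>J. \<forall>J'\<ge>J. 4 * (\<Sum>j. bseq (j + J')) < e"
proof -
  obtain N where N: "\<forall>n\<ge>N. norm (\<Sum>i. bseq (i + n)) < e / 4"
    using suminf_exist_split[of "e/4" bseq] assms summable_bseq by auto
  then show ?thesis by (intro exI[of _ N]) auto
qed

definition geta :: "real \<Rightarrow> real \<Rightarrow> real" where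
  "geta \<eta> x = 1 / sqrt (max (1 - x^2) \<eta>)"

definition trap :: "real \<Rightarrow> real \<Rightarrow> real \<Rightarrow> real \<Rightarrow> real" where
  "trap \<alpha> \<beta> \<delta> x = max 0 (min 1 (min ((x - \<alpha>) / \<delta>) ((\<beta> - x) / \<delta>)))"

lemma trap_01: "0 \<le> trap \<alpha> \<beta> \<delta> x" "trap \<alpha> \<beta> \<delta> x \<le> 1"
  unfolding trap_def by auto

lemma trap_zero: "\<delta> > 0 \<Longrightarrow> \<not> (\<alpha> < x \<and> x < \<beta>) \<Longrightarrow> trap \<alpha> \<beta> \<delta> x = 0"
proof -
  assume d: "\<delta> > 0" and n: "\<not> (\<alpha> < x \<and> x < \<beta>)"
  have "(x - \<alpha>) / \<delta> \<le> 0 \<or> (\<beta> - x) / \<delta> \<le> 0" using d n by (auto simp: divide_le_0_iff)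
  then have "min ((x - \<alpha>) / \<delta>) ((\<beta> - x) / \<delta>) \<le> 0" by linarith
  then show ?thesis unfolding trap_def by linarith
qed

lemma trap_one: "\<delta> > 0 \<Longrightarrow> \<alpha> + \<delta> \<le> x \<Longrightarrow> x \<le> \<beta> - \<delta> \<Longrightarrow> trap \<alpha> \<beta> \<delta> x = 1"
  unfolding trap_def by (auto simp: min_def le_divide_eq)

lemma trap_cont: "\<delta> > 0 \<Longrightarrow> continuous_on S (trap \<alpha> \<beta> \<delta>)"
  unfolding trap_def by (intro continuous_intros) auto

lemma geta_cont: "\<eta> > 0 \<Longrightarrow> continuous_on S (geta \<eta>)"
proof -
  assume e: "\<eta> > 0"
  have p: "\<And>x. max (1 - x^2) \<eta> \<noteq> 0" "\<And>x. 0 \<le> max (1 - x^2) \<eta>"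
    using e by (auto simp: le_max_iff_disj max_def)
  show ?thesis unfolding geta_def by (intro continuous_intros) (auto simp: p)
qed

lemma geta_nonneg: "\<eta> > 0 \<Longrightarrow> geta \<eta> x \<ge> 0" unfolding geta_def by (simp add: le_max_iff_disj)

lemma geta_le: "\<eta> > 0 \<Longrightarrow> 1 - x^2 > 0 \<Longrightarrow> geta \<eta> x \<le> gfun x"
proof -
  assume e: "\<eta> > 0" and y: "1 - x^2 > 0"
  have "sqrt (1 - x^2) \<le> sqrt (max (1 - x^2) \<eta>)" by simp
  moreover have "sqrt (1 - x^2) > 0" using y by simp
  moreover have "x^2 \<le> 1" using y by linarith
  ultimately show ?thesis unfolding geta_def gfun_def by (intro divide_left_mono) auto
qed

lemma geta_eq: "\<eta> > 0 \<Longrightarrow> 1 - x^2 \<ge> \<eta> \<Longrightarrow> geta \<eta> x = gfun x"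
proof -
  assume "\<eta> > 0" "1 - x^2 \<ge> \<eta>"
  then have "max (1 - x^2) \<eta> = 1 - x^2" by (simp add: max_absorb1)
  then show ?thesis unfolding geta_def gfun_def by simp
qed

lemma gfun_nonneg: "x^2 \<le> 1 \<Longrightarrow> gfun x \<ge> 0" unfolding gfun_def by simp

lemma gfun_has_integral:
  assumes "-1 < a" "a \<le> b" "b < 1"
  shows "(gfun has_integral (arcsin b - arcsin a)) {a..b}"
proof (rule fundamental_theorem_of_calculus[OF assms(2)])
  fix x assume x: "x \<in> {a..b}"
  then have x1: "-1 < x" "x < 1" using assms by auto
  then have "x^2 < 1" using abs_square_less_1[of x] by (simp add: abs_less_iff)
  then have "(arcsin has_real_derivative gfun x) (at x)"
    using DERIV_arcsin[OF x1] unfolding gfun_def by (simp add: divide_inverse)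
  then show "(arcsin has_vector_derivative gfun x) (at x within {a..b})"
    by (simp add: has_real_derivative_iff_has_vector_derivative[symmetric] has_field_derivative_at_within)
qed

lemma arcsin_cont_at:
  assumes "v \<in> {-1..1}" "e > 0"
  shows "\<exists>d>0. \<forall>x\<in>{-1..1}. \<bar>x - v\<bar> < d \<longrightarrow> \<bar>arcsin x - arcsin v\<bar> < e"
  using continuous_on_arcsin' assms unfolding continuous_on_iff dist_real_def by blast

lemma sq_le_max:
  fixes x a b :: real
  assumes "a \<le> x" "x \<le> b"
  shows "x^2 \<le> max (a^2) (b^2)"
proof (cases "x \<ge> 0")
  case True
  then have "x^2 \<le> b^2" using assms by (intro power_mono) auto
  then show ?thesis by simp
next
  case False
  then have "(-x)^2 \<le> (-a)^2" using assms by (intro power_mono) auto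
  then show ?thesis by simp
qed

lemma lower_bound:
  assumes uv: "-1 \<le> u" "u < v" "v \<le> 1" and e: "e > 0"
  shows "\<exists>N. \<forall>c\<ge>N. arcsin v - arcsin u - e \<le> SS c (\<lambda>x. if u < x \<and> x < v then gfun x else 0)"
proof -
  obtain d1 where d1: "d1 > 0" "\<forall>x\<in>{-1..1}. \<bar>x - v\<bar> < d1 \<longrightarrow> \<bar>arcsin x - arcsin v\<bar> < e/3"
    using arcsin_cont_at[of v "e/3"] uv e by auto
  obtain d2 where d2: "d2 > 0" "\<forall>x\<in>{-1..1}. \<bar>x - u\<bar> < d2 \<longrightarrow> \<bar>arcsin x - arcsin u\<bar> < e/3"
    using arcsin_cont_at[of u "e/3"] uv e by auto
  define \<delta> where "\<delta> = min (min d1 d2) (v - u) / 4"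
  have \<delta>: "\<delta> > 0" "\<delta> < d1" "\<delta> < d2" "4 * \<delta> \<le> v - u" unfolding \<delta>_def using d1 d2 uv by auto
  define u1 where "u1 = u + \<delta>"
  define v1 where "v1 = v - \<delta>"
  have uv1: "-1 < u1" "u1 \<le> v1" "v1 < 1" unfolding u1_def v1_def using \<delta> uv by auto
  define \<eta> where "\<eta> = min (1 - u1^2) (1 - v1^2)"
  have \<eta>: "\<eta> > 0" unfolding \<eta>_def using uv1 abs_square_less_1[of u1] abs_square_less_1[of v1]
    by (auto simp: abs_less_iff)
  have in_eta: "1 - x^2 \<ge> \<eta>" if "x \<in> {u1..v1}" for x
    using sq_le_max[of u1 x v1] that unfolding \<eta>_def by auto
  define h where "h x = geta \<eta> x * trap u v \<delta> x" for x
  have hcont: "continuous_on {-1..1} h" unfolding h_def[abs_def]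
    by (intro continuous_intros geta_cont[OF \<eta>] trap_cont[OF \<delta>(1)])
  define K where "K x = (if x \<in> {u1..v1} then gfun x else 0)" for x
  have Kint: "(K has_integral (arcsin v1 - arcsin u1)) {-1..1}"
    using has_integral_restrict_closed_subinterval[OF gfun_has_integral[OF uv1, folded cbox_interval], of "-1" 1] uv1
    unfolding K_def cbox_interval by simp
  have hint: "h integrable_on {-1..1}" using hcont integrable_continuous_real by blast
  have Ih: "arcsin v1 - arcsin u1 \<le> integral {-1..1} h"
  proof -
    have "integral {-1..1} K \<le> integral {-1..1} h"
    proof (rule integral_le)
      show "K integrable_on {-1..1}" using Kint by blast
      show "h integrable_on {-1..1}" by (rule hint)
      fix x :: real assume x: "x \<in> {-1..1}"
      show "K x \<le> h x"
      proof (cases "x \<in> {u1..v1}")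
        case True
        then have "trap u v \<delta> x = 1" using \<delta> unfolding u1_def v1_def by (intro trap_one) auto
        moreover have "geta \<eta> x = gfun x" using in_eta[OF True] \<eta> by (intro geta_eq) auto
        ultimately show ?thesis unfolding K_def h_def using True by simp
      next
        case False
        then show ?thesis unfolding K_def h_def using geta_nonneg[OF \<eta>] trap_01 by (auto intro: mult_nonneg_nonneg)
      qed
    qed
    then show ?thesis using Kint by (simp add: integral_unique)
  qed
  have "\<bar>arcsin v1 - arcsin v\<bar> < e/3"
    using d1(2)[rule_format, of v1] \<delta> uv1 unfolding v1_def by auto
  then have av: "arcsin v - e/3 < arcsin v1" by (simp only: abs_less_iff) linarith
  have "\<bar>arcsin u1 - arcsin u\<bar> < e/3"
    using d2(2)[rule_format, of u1] \<delta> uv1 unfolding u1_def by auto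
  then have au: "arcsin u1 < arcsin u + e/3" by (simp only: abs_less_iff) linarith
  obtain N0 where N0: "\<forall>c\<ge>N0. norm (SS c h - integral {-1..1} h) < e/3"
    using weak_conv[OF hcont] e unfolding LIMSEQ_def dist_real_def
    by (metis divide_pos_pos zero_less_numeral real_norm_def)
  show ?thesis
  proof (intro exI[of _ "max 1 N0"] allI impI)
    fix c assume c: "c \<ge> max 1 N0"
    then have c1: "c \<ge> 1" by simp
    have "SS c h \<le> SS c (\<lambda>x. if u < x \<and> x < v then gfun x else 0)"
    proof (rule SS_mono[OF c1])
      fix a assume a: "a \<in> Rset c"
      have ya: "1 - a^2 > 0" using RR_sub[OF c1 a] abs_square_less_1[of a] by (simp add: abs_less_iff)
      show "h a \<le> (if u < a \<and> a < v then gfun a else 0)"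
      proof (cases "u < a \<and> a < v")
        case True
        have "h a \<le> geta \<eta> a * 1" unfolding h_def
          using trap_01[of u v \<delta> a] geta_nonneg[OF \<eta>] by (intro mult_left_mono) auto
        also have "\<dots> \<le> gfun a" using geta_le[OF \<eta> ya] by simp
        finally show ?thesis using True by simp
      next
        case False
        then show ?thesis unfolding h_def using trap_zero[OF \<delta>(1) False] by auto
      qed
    qed
    moreover have "integral {-1..1} h - e/3 < SS c h"
    proof -
      have "\<bar>SS c h - integral {-1..1} h\<bar> < e/3" using N0 c by auto
      then show ?thesis by (simp only: abs_less_iff) linarith
    qed
    ultimately show "arcsin v - arcsin u - e \<le> SS c (\<lambda>x. if u < x \<and> x < v then gfun x else 0)"
      using Ih av au by linarith
  qed
qed

lemma upper_bound:
  assumes uv: "-1 \<le> u" "u \<le> v" "v \<le> 1" "u < 1" "-1 < v" and e: "e > 0"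
  shows "\<exists>N. \<forall>c\<ge>N. SS c (\<lambda>x. if u \<le> x \<and> x \<le> v then gfun x else 0) \<le> arcsin v - arcsin u + e"
proof -
  obtain J0 where J0: "\<forall>J'\<ge>J0. 4 * (\<Sum>j. bseq (j + J')) < e/3"
    using tail_small[of "e/3"] e by auto
  have mpos: "min (1 - u) (1 + v) > 0" using uv by simp
  obtain J1 where J1: "(1/4::real)^J1 < min (1 - u) (1 + v)"
    using real_arch_pow_inv[OF mpos, of "1/4"] by auto
  define J where "J = max J0 J1"
  define \<eta> where "\<eta> = (1/4::real)^J"
  have \<eta>pos: "\<eta> > 0" unfolding \<eta>_def by simp
  have \<eta>le: "\<eta> \<le> (1/4)^J1" unfolding \<eta>_def J_def by (intro power_decreasing) auto
  have \<eta>1: "\<eta> < 1 - u" "\<eta> < 1 + v" using \<eta>le J1 by auto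
  have \<eta>one: "\<eta> \<le> 1" unfolding \<eta>_def by (simp add: power_le_one)
  have tail: "4 * (\<Sum>j. bseq (j + J)) < e/3" using J0 unfolding J_def by auto
  obtain d1 where d1: "d1 > 0" "\<forall>x\<in>{-1..1}. \<bar>x - v\<bar> < d1 \<longrightarrow> \<bar>arcsin x - arcsin v\<bar> < e/6"
    using arcsin_cont_at[of v "e/6"] uv e by auto
  obtain d2 where d2: "d2 > 0" "\<forall>x\<in>{-1..1}. \<bar>x - u\<bar> < d2 \<longrightarrow> \<bar>arcsin x - arcsin u\<bar> < e/6"
    using arcsin_cont_at[of u "e/6"] uv e by auto
  define \<delta> where "\<delta> = min (min d1 d2 / 2) (\<eta> / 4)"
  have \<delta>: "\<delta> > 0" "\<delta> < d1" "\<delta> < d2" "\<delta> \<le> \<eta>/4" unfolding \<delta>_def using d1 d2 \<eta>pos by auto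
  define \<alpha> where "\<alpha> = max (u - \<delta>) (-1 + \<eta>/4)"
  define \<beta> where "\<beta> = min (v + \<delta>) (1 - \<eta>/4)"
  have ab: "-1 < \<alpha>" "\<alpha> \<le> \<beta>" "\<beta> < 1" unfolding \<alpha>_def \<beta>_def using \<eta>pos \<eta>1 \<eta>one \<delta> uv by auto
  define H where "H x = geta \<eta> x * trap \<alpha> \<beta> \<delta> x" for x
  have Hcont: "continuous_on {-1..1} H" unfolding H_def[abs_def]
    by (intro continuous_intros geta_cont[OF \<eta>pos] trap_cont[OF \<delta>(1)])
  have Hnn: "H x \<ge> 0" for x unfolding H_def using geta_nonneg[OF \<eta>pos] trap_01 by simp
  define K where "K x = (if x \<in> {\<alpha>..\<beta>} then gfun x else 0)" for x
  have Kint: "(K has_integral (arcsin \<beta> - arcsin \<alpha>)) {-1..1}"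
    using has_integral_restrict_closed_subinterval[OF gfun_has_integral[OF ab, folded cbox_interval], of "-1" 1] ab
    unfolding K_def cbox_interval by simp
  have Hint: "H integrable_on {-1..1}" using Hcont integrable_continuous_real by blast
  have IH: "integral {-1..1} H \<le> arcsin \<beta> - arcsin \<alpha>"
  proof -
    have "integral {-1..1} H \<le> integral {-1..1} K"
    proof (rule integral_le)
      show "K integrable_on {-1..1}" using Kint by blast
      show "H integrable_on {-1..1}" by (rule Hint)
      fix x :: real assume x: "x \<in> {-1..1}"
      show "H x \<le> K x"
      proof (cases "x \<in> {\<alpha>..\<beta>}")
        case True
        then have "-1 < x" "x < 1" using ab by auto
        then have y: "1 - x^2 > 0" using abs_square_less_1[of x] by (simp add: abs_less_iff)
        have "H x \<le> geta \<eta> x * 1" unfolding H_def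
          using trap_01[of \<alpha> \<beta> \<delta> x] geta_nonneg[OF \<eta>pos] by (intro mult_left_mono) auto
        also have "\<dots> \<le> gfun x" using geta_le[OF \<eta>pos y] by simp
        finally show ?thesis unfolding K_def using True by simp
      next
        case False
        then have "\<not> (\<alpha> < x \<and> x < \<beta>)" by auto
        then show ?thesis unfolding K_def H_def using False trap_zero[OF \<delta>(1)] by auto
      qed
    qed
    then show ?thesis using Kint by (simp add: integral_unique)
  qed
  have aB: "arcsin \<beta> \<le> arcsin v + e/6"
  proof (cases "\<beta> \<le> v")
    case True then show ?thesis using arcsin_le_arcsin[of \<beta> v] ab uv e by auto
  next
    case False
    then have "\<bar>\<beta> - v\<bar> < d1" using \<delta> unfolding \<beta>_def by auto
    then have "\<bar>arcsin \<beta> - arcsin v\<bar> < e/6" using d1(2) ab by auto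
    then show ?thesis by (simp only: abs_less_iff) linarith
  qed
  have aA: "arcsin u - e/6 \<le> arcsin \<alpha>"
  proof (cases "u \<le> \<alpha>")
    case True then show ?thesis using arcsin_le_arcsin[of u \<alpha>] ab uv e by auto
  next
    case False
    then have "\<bar>\<alpha> - u\<bar> < d2" using \<delta> unfolding \<alpha>_def by auto
    then have "\<bar>arcsin \<alpha> - arcsin u\<bar> < e/6" using d2(2) ab by auto
    then show ?thesis by (simp only: abs_less_iff) linarith
  qed
  obtain N0 where N0: "\<forall>c\<ge>N0. norm (SS c H - integral {-1..1} H) < e/3"
    using weak_conv[OF Hcont] e unfolding LIMSEQ_def dist_real_def
    by (metis divide_pos_pos zero_less_numeral real_norm_def)
  show ?thesis
  proof (intro exI[of _ "max 1 N0"] allI impI)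
    fix c assume c: "c \<ge> max 1 N0"
    then have c1: "c \<ge> 1" by simp
    have "SS c (\<lambda>x. if u \<le> x \<and> x \<le> v then gfun x else 0)
        \<le> SS c (\<lambda>x. H x + (if 1 - x^2 \<le> (1/4)^J then gfun x else 0))"
    proof (rule SS_mono[OF c1])
      fix a assume a: "a \<in> Rset c"
      have a1: "-1 < a" "a < 1" using RR_sub[OF c1 a] by auto
      have ya: "1 - a^2 > 0" using a1 abs_square_less_1[of a] by (simp add: abs_less_iff)
      have gnn: "gfun a \<ge> 0" using ya by (intro gfun_nonneg) simp
      show "(if u \<le> a \<and> a \<le> v then gfun a else 0) \<le> H a + (if 1 - a^2 \<le> (1/4)^J then gfun a else 0)"
      proof (cases "u \<le> a \<and> a \<le> v")
        case inuv: True
        show ?thesis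
        proof (cases "1 - a^2 \<le> (1/4)^J")
          case True then show ?thesis using inuv Hnn[of a] by simp
        next
          case False
          then have yb: "1 - a^2 > \<eta>" unfolding \<eta>_def by simp
          have "1 - a^2 \<le> 2 * (1 - \<bar>a\<bar>)"
          proof -
            have "1 - a^2 = (1 - \<bar>a\<bar>) * (1 + \<bar>a\<bar>)" by (simp add: algebra_simps power2_eq_square)
            also have "\<dots> \<le> (1 - \<bar>a\<bar>) * 2" using a1 by (intro mult_left_mono) auto
            finally show ?thesis by simp
          qed
          then have "1 - a^2 \<le> 2 - 2 * \<bar>a\<bar>" by simp
          then have "\<bar>a\<bar> < 1 - \<eta>/2" using yb by linarith
          then have ab2: "-1 + \<eta>/2 < a" "a < 1 - \<eta>/2" by (auto simp: abs_less_iff)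
          have "\<alpha> + \<delta> \<le> a" unfolding \<alpha>_def using inuv ab2 \<delta> by auto
          moreover have "a \<le> \<beta> - \<delta>" unfolding \<beta>_def using inuv ab2 \<delta> by auto
          ultimately have "trap \<alpha> \<beta> \<delta> a = 1" using \<delta> by (intro trap_one) auto
          moreover have "geta \<eta> a = gfun a" using yb \<eta>pos by (intro geta_eq) auto
          ultimately show ?thesis unfolding H_def using inuv False by simp
        qed
      next
        case False
        then show ?thesis using Hnn[of a] gnn by auto
      qed
    qed
    also have "\<dots> = SS c H + SS c (\<lambda>x. if 1 - x^2 \<le> (1/4)^J then gfun x else 0)"
      by (rule SS_add)
    also have "\<dots> \<le> SS c H + e/3" using tail_bound[OF c1, of J] tail by simp
    also have "SS c H \<le> integral {-1..1} H + e/3"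
    proof -
      have "\<bar>SS c H - integral {-1..1} H\<bar> < e/3" using N0 c by auto
      then show ?thesis by (simp only: abs_less_iff) linarith
    qed
    finally show "SS c (\<lambda>x. if u \<le> x \<and> x \<le> v then gfun x else 0) \<le> arcsin v - arcsin u + e"
      using IH aB aA by linarith
  qed
qed

lemma sum_roots:
  assumes c: "c \<ge> 1"
  shows "(\<Sum>k=1..c. f (legendre_root k c)) = (\<Sum>a\<in>Rset c. f a)"
proof -
  define xs where "xs = sorted_list_of_set (Rset c)"
  have fin: "finite (Rset c)" using RR_fin[OF c] .
  have sx: "set xs = Rset c" unfolding xs_def using fin by simp
  have dx: "distinct xs" unfolding xs_def by simp
  have lx: "length xs = c" unfolding xs_def using RR_card[OF c] by simp
  have lr: "legendre_root k c = xs ! (k - 1)" for k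
    unfolding legendre_root_def xs_def Rset_def by simp
  have img: "(\<lambda>k. xs ! (k - 1)) ` {1..c} = set xs"
  proof
    show "(\<lambda>k. xs ! (k - 1)) ` {1..c} \<subseteq> set xs" using lx by auto
    show "set xs \<subseteq> (\<lambda>k. xs ! (k - 1)) ` {1..c}"
    proof
      fix a assume "a \<in> set xs"
      then obtain i where i: "i < length xs" "xs ! i = a" by (auto simp: in_set_conv_nth)
      then show "a \<in> (\<lambda>k. xs ! (k - 1)) ` {1..c}" using lx
        by (intro image_eqI[of _ _ "Suc i"]) auto
    qed
  qed
  have inj: "inj_on (\<lambda>k. xs ! (k - 1)) {1..c}"
  proof (rule inj_onI)
    fix k k' assume k: "k \<in> {1..c}" "k' \<in> {1..c}" and e: "xs ! (k - 1) = xs ! (k' - 1)"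
    then have "k - 1 = k' - 1" using nth_eq_iff_index_eq[OF dx] lx by auto
    then show "k = k'" using k by auto
  qed
  have "(\<Sum>a\<in>Rset c. f a) = (\<Sum>a\<in>(\<lambda>k. xs ! (k - 1)) ` {1..c}. f a)" using img sx by simp
  also have "\<dots> = (\<Sum>k=1..c. f (xs ! (k - 1)))" by (subst sum.reindex[OF inj]) simp
  finally show ?thesis by (simp add: lr)
qed

lemma tardos_w_eq:
  assumes c: "c \<ge> 1" and a: "legendre_root k c \<in> Rset c"
  shows "tardos_w k c = mu c (legendre_root k c) * gfun (legendre_root k c)"
proof -
  define r where "r = legendre_root k c"
  have y: "1 - r^2 > 0" using RR_sub[OF c a[folded r_def]] abs_square_less_1[of r] by (simp add: abs_less_iff)
  have pw: "(1 - r^2) powr (3/2) = (1 - r^2) * sqrt (1 - r^2)"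
  proof -
    have "(1 - r^2) powr (3/2) = (1 - r^2) powr (1 + 1/2)" by simp
    also have "\<dots> = (1 - r^2) powr 1 * (1 - r^2) powr (1/2)" by (rule powr_add)
    also have "\<dots> = (1 - r^2) * sqrt (1 - r^2)" using y by (simp add: powr_half_sqrt)
    finally show ?thesis .
  qed
  have m: "mu c r = 2 / ((1 - r^2) * (poly (pderiv (legendre c)) r)^2)" by (simp add: mu_def[OF c])
  have "tardos_w k c = 2 / ((1 - r^2) * sqrt (1 - r^2) * (poly (pderiv (legendre c)) r)^2)"
    unfolding tardos_w_def r_def[symmetric] pw ..
  also have "\<dots> = mu c r * gfun r" unfolding m gfun_def by simp
  finally show ?thesis unfolding r_def .
qed

lemma roots_in: "c \<ge> 1 \<Longrightarrow> k \<in> {1..c} \<Longrightarrow> legendre_root k c \<in> Rset c"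
proof -
  assume c: "c \<ge> 1" and k: "k \<in> {1..c}"
  define xs where "xs = sorted_list_of_set (Rset c)"
  have "set xs = Rset c" unfolding xs_def using RR_fin[OF c] by simp
  moreover have "length xs = c" unfolding xs_def using RR_card[OF c] by simp
  moreover have "legendre_root k c = xs ! (k - 1)" unfolding legendre_root_def xs_def Rset_def by simp
  ultimately show ?thesis using k by (metis atLeastAtMost_iff diff_less le_trans nth_mem zero_less_one less_le_trans)
qed

definition Aseq :: "real \<Rightarrow> nat \<Rightarrow> real" where
  "Aseq t c = SS c (\<lambda>x. if x \<le> t then gfun x else 0)"
definition BBs :: "real \<Rightarrow> nat \<Rightarrow> real" where
  "BBs t c = SS c (\<lambda>x. if t < x then gfun x else 0)"

lemma F_opt_eq:
  assumes c: "c \<ge> 1"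
  shows "F_opt c p = Aseq (2*p - 1) c / (Aseq (2*p - 1) c + BBs (2*p - 1) c)"
proof -
  define t where "t = 2*p - 1"
  let ?W = "\<lambda>a. mu c a * gfun a"
  have S1: "(\<Sum>k=1..c. tardos_w k c * heaviside (p - tardos_p k c))
       = (\<Sum>a\<in>Rset c. mu c a * (if a \<le> t then gfun a else 0))"
  proof -
    have "(\<Sum>k=1..c. tardos_w k c * heaviside (p - tardos_p k c))
        = (\<Sum>k=1..c. (\<lambda>a. mu c a * (if a \<le> t then gfun a else 0)) (legendre_root k c))"
    proof (rule sum.cong[OF refl])
      fix k assume k: "k \<in> {1..c}"
      have h: "heaviside (p - tardos_p k c) = (if legendre_root k c \<le> t then 1 else 0)"
        unfolding heaviside_def tardos_p_def t_def by auto
      show "tardos_w k c * heaviside (p - tardos_p k c)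
          = (\<lambda>a. mu c a * (if a \<le> t then gfun a else 0)) (legendre_root k c)"
        using tardos_w_eq[OF c roots_in[OF c k]] h by simp
    qed
    also have "\<dots> = (\<Sum>a\<in>Rset c. mu c a * (if a \<le> t then gfun a else 0))" by (rule sum_roots[OF c])
    finally show ?thesis .
  qed
  have S2: "tardos_N c = (\<Sum>a\<in>Rset c. mu c a * (if a \<le> t then gfun a else 0))
                       + (\<Sum>a\<in>Rset c. mu c a * (if t < a then gfun a else 0))"
  proof -
    have "tardos_N c = (\<Sum>k=1..c. (\<lambda>a. mu c a * gfun a) (legendre_root k c))"
      unfolding tardos_N_def using tardos_w_eq[OF c roots_in[OF c]] by (intro sum.cong) auto
    also have "\<dots> = (\<Sum>a\<in>Rset c. mu c a * gfun a)" by (rule sum_roots[OF c])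
    also have "\<dots> = (\<Sum>a\<in>Rset c. mu c a * (if a \<le> t then gfun a else 0) + mu c a * (if t < a then gfun a else 0))"
      by (intro sum.cong) auto
    finally show ?thesis by (simp add: sum.distrib)
  qed
  have K: "KK c > 0" using KK_pos[OF c] .
  define X where "X = (\<Sum>a\<in>Rset c. mu c a * (if a \<le> t then gfun a else 0))"
  define Y where "Y = (\<Sum>a\<in>Rset c. mu c a * (if t < a then gfun a else 0))"
  have "F_opt c p = X / (X + Y)" unfolding F_opt_def S1 S2 X_def Y_def by simp
  also have "\<dots> = (KK c * X) / (KK c * (X + Y))" using K by simp
  also have "\<dots> = (KK c * X) / (KK c * X + KK c * Y)" by (simp add: distrib_left)
  finally show ?thesis unfolding Aseq_def BBs_def SS_def t_def[symmetric] X_def Y_def .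
qed

lemma arcsine_identity:
  assumes "0 < p" "p < 1"
  shows "F_arcsine p = (arcsin (2*p - 1) + pi/2) / pi"
proof -
  define \<theta> where "\<theta> = arcsin (sqrt p)"
  have sp: "0 \<le> sqrt p" "sqrt p \<le> 1" using assms by auto
  have st: "sin \<theta> = sqrt p" unfolding \<theta>_def by (rule sin_arcsin) (use sp in linarith)+
  have tb: "0 \<le> \<theta>" "\<theta> \<le> pi/2"
    using arcsin_le_arcsin[of 0 "sqrt p"] arcsin_bounded[of "sqrt p"] sp unfolding \<theta>_def by auto
  have "sin (2*\<theta> - pi/2) = - cos (2*\<theta>)" by (simp add: sin_diff)
  also have "\<dots> = 2 * p - 1" using st assms by (simp add: cos_double_sin)
  finally have "arcsin (2*p - 1) = arcsin (sin (2*\<theta> - pi/2))" by simp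
  also have "\<dots> = 2*\<theta> - pi/2" using tb by (intro arcsin_sin) auto
  finally show ?thesis unfolding F_arcsine_def \<theta>_def by (simp add: field_simps)
qed

lemma conv_from_bounds:
  fixes X :: "nat \<Rightarrow> real"
  assumes "\<And>r. r > 0 \<Longrightarrow> \<exists>N. \<forall>c\<ge>N. L - r \<le> X c \<and> X c \<le> L + r"
  shows "X \<longlonglongrightarrow> L"
proof (rule LIMSEQ_I)
  fix r :: real assume r: "r > 0"
  obtain N where N: "\<forall>c\<ge>N. L - r/2 \<le> X c \<and> X c \<le> L + r/2" using assms[of "r/2"] r by auto
  show "\<exists>no. \<forall>n\<ge>no. norm (X n - L) < r"
  proof (intro exI allI impI)
    fix n assume "n \<ge> N"
    then have "L - r/2 \<le> X n" "X n \<le> L + r/2" using N by auto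
    then show "norm (X n - L) < r" using r by (simp add: abs_less_iff)
  qed
qed

lemma A_lim:
  assumes t: "-1 < t" "t < 1"
  shows "Aseq t \<longlonglongrightarrow> arcsin t + pi/2"
proof (rule conv_from_bounds)
  fix r :: real assume r: "r > 0"
  obtain N1 where N1: "\<forall>c\<ge>N1. arcsin t - arcsin (-1) - r \<le> SS c (\<lambda>x. if -1 < x \<and> x < t then gfun x else 0)"
    using lower_bound[of "-1" t r] t r by auto
  obtain N2 where N2: "\<forall>c\<ge>N2. SS c (\<lambda>x. if -1 \<le> x \<and> x \<le> t then gfun x else 0) \<le> arcsin t - arcsin (-1) + r"
    using upper_bound[of "-1" t r] t r by auto
  show "\<exists>N. \<forall>c\<ge>N. arcsin t + pi/2 - r \<le> Aseq t c \<and> Aseq t c \<le> arcsin t + pi/2 + r"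
  proof (intro exI[of _ "max 1 (max N1 N2)"] allI impI conjI)
    fix c assume c: "c \<ge> max 1 (max N1 N2)"
    then have c1: "c \<ge> 1" by simp
    have gn: "\<And>a. a \<in> Rset c \<Longrightarrow> -1 < a \<and> a < 1 \<and> gfun a \<ge> 0"
    proof -
      fix a assume a: "a \<in> Rset c"
      then have a1: "-1 < a" "a < 1" using RR_sub[OF c1] by auto
      then have "a^2 \<le> 1" using abs_square_le_1[of a] by (simp add: abs_le_iff)
      then show "-1 < a \<and> a < 1 \<and> gfun a \<ge> 0" using a1 gfun_nonneg by auto
    qed
    have "SS c (\<lambda>x. if -1 < x \<and> x < t then gfun x else 0) \<le> Aseq t c"
      unfolding Aseq_def by (intro SS_mono[OF c1]) (auto dest!: gn)
    then show "arcsin t + pi/2 - r \<le> Aseq t c" using N1 c by auto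
    have "Aseq t c \<le> SS c (\<lambda>x. if -1 \<le> x \<and> x \<le> t then gfun x else 0)"
      unfolding Aseq_def by (intro SS_mono[OF c1]) (auto dest!: gn)
    then show "Aseq t c \<le> arcsin t + pi/2 + r" using N2 c by auto
  qed
qed

lemma B_lim:
  assumes t: "-1 < t" "t < 1"
  shows "BBs t \<longlonglongrightarrow> pi/2 - arcsin t"
proof (rule conv_from_bounds)
  fix r :: real assume r: "r > 0"
  obtain N1 where N1: "\<forall>c\<ge>N1. arcsin 1 - arcsin t - r \<le> SS c (\<lambda>x. if t < x \<and> x < 1 then gfun x else 0)"
    using lower_bound[of t 1 r] t r by auto
  obtain N2 where N2: "\<forall>c\<ge>N2. SS c (\<lambda>x. if t \<le> x \<and> x \<le> 1 then gfun x else 0) \<le> arcsin 1 - arcsin t + r"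
    using upper_bound[of t 1 r] t r by auto
  show "\<exists>N. \<forall>c\<ge>N. pi/2 - arcsin t - r \<le> BBs t c \<and> BBs t c \<le> pi/2 - arcsin t + r"
  proof (intro exI[of _ "max 1 (max N1 N2)"] allI impI conjI)
    fix c assume c: "c \<ge> max 1 (max N1 N2)"
    then have c1: "c \<ge> 1" by simp
    have gn: "\<And>a. a \<in> Rset c \<Longrightarrow> -1 < a \<and> a < 1 \<and> gfun a \<ge> 0"
    proof -
      fix a assume a: "a \<in> Rset c"
      then have a1: "-1 < a" "a < 1" using RR_sub[OF c1] by auto
      then have "a^2 \<le> 1" using abs_square_le_1[of a] by (simp add: abs_le_iff)
      then show "-1 < a \<and> a < 1 \<and> gfun a \<ge> 0" using a1 gfun_nonneg by auto
    qed
    have "SS c (\<lambda>x. if t < x \<and> x < 1 then gfun x else 0) \<le> BBs t c"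
      unfolding BBs_def by (intro SS_mono[OF c1]) (auto dest!: gn)
    then show "pi/2 - arcsin t - r \<le> BBs t c" using N1 c by auto
    have "BBs t c \<le> SS c (\<lambda>x. if t \<le> x \<and> x \<le> 1 then gfun x else 0)"
      unfolding BBs_def by (intro SS_mono[OF c1]) (auto dest!: gn)
    then show "BBs t c \<le> pi/2 - arcsin t + r" using N2 c by auto
  qed
qed

theorem theorem2:
  fixes p :: real
  assumes "0 < p" and "p < 1"
  shows "(\<lambda>c. F_opt c p) \<longlonglongrightarrow> F_arcsine p"
proof -
  define t where "t = 2*p - 1"
  have t: "-1 < t" "t < 1" unfolding t_def using assms by auto
  have lim: "(\<lambda>c. Aseq t c / (Aseq t c + BBs t c)) \<longlonglongrightarrow>
      (arcsin t + pi/2) / ((arcsin t + pi/2) + (pi/2 - arcsin t))"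
    by (intro tendsto_divide tendsto_add A_lim[OF t] B_lim[OF t]) auto
  have "(arcsin t + pi/2) / ((arcsin t + pi/2) + (pi/2 - arcsin t)) = F_arcsine p"
    using arcsine_identity[OF assms] unfolding t_def by simp
  then have lim2: "(\<lambda>c. Aseq t c / (Aseq t c + BBs t c)) \<longlonglongrightarrow> F_arcsine p" using lim by simp
  have ev: "eventually (\<lambda>c. Aseq t c / (Aseq t c + BBs t c) = F_opt c p) sequentially"
    using eventually_ge_at_top[of 1] by eventually_elim (simp add: F_opt_eq t_def)
  show ?thesis using Lim_transform_eventually[OF lim2 ev] .
qed

end
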